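(* Let $c_0>0$, $T>0$, and let $(\hat u,\hat v)$ be a smooth solution of the NLDE on $\mathbb{R}\times[0,T]$ with $\mathcal{M}_0,\mathcal{M}<\infty$. There exist constants $\hat C_4,\hat C_5>0$, depending only on $c_0,\mathcal{M}_0,\mathcal{M},m,\alpha,\beta$, such that for every $\tau\in(0,1)$, every time-splitting solution with mesh $\tau$ whose initial data satisfy $\sum_j(|u_j^0|^2+|v_j^0|^2)\tau\le c_0$, all $j\in\mathbb{Z}$ and all integers $n\ge0$ with $(n+1)\tau\le T$, $$|\mathcal{U}_j^n(\tau)|^2\le|\mathcal{U}_j^n(0)|^2+\hat C_4\big(\tilde{\mathcal{L}}_j^n(0)+\tilde{\mathcal{D}}_j^n(0)\big)\tau+\hat C_5\mathcal{M}^2\tau^2,$$ $$|\mathcal{V}_{j+2}^n(\tau)|^2\le|\mathcal{V}_{j+2}^n(0)|^2+\hat C_4\big(\tilde{\mathcal{L}}_j^n(0)+\tilde{\mathcal{D}}_j^n(0)\big)\tau+\hat C_5\mathcal{M}^2\tau^2.$$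
   Context: Fix constants $m\ge 0$ and $\alpha,\beta\in\mathbb{R}$. The NLDE for $(u,v):\mathbb{R}\times[0,T]\to\mathbb{C}^2$ is $u_t+u_x=imv+i\alpha u|v|^2+2i\beta(\bar u v+u\bar v)v$, $v_t-v_x=imu+i\alpha v|u|^2+2i\beta(\bar u v+u\bar v)u$. Let (N) denote the ODE system on $\mathbb{C}^2$: $\frac{du}{ds}=imv+i\alpha u|v|^2+2i\beta(\bar u v+u\bar v)v$, $\frac{dv}{ds}=imu+i\alpha v|u|^2+2i\beta(\bar u v+u\bar v)u$. Time-splitting scheme with mesh $\tau>0$: given $(u_j^0,v_j^0)_{j\in\mathbb{Z}}\subset\mathbb{C}^2$ with $\sum_j(|u_j^0|^2+|v_j^0|^2)<\infty$, set $(u^{(\tau)},v^{(\tau)})(x,0)=(u_j^0,v_j^0)$ for $x\in[j\tau,(j+1)\tau)$. Inductively, once $(u^{(\tau)},v^{(\tau)})(\cdot,n\tau)$ is defined, set for $t\in[n\tau,(n+1)\tau)$: $u^{(\tau)}(x,t)=u^{(\tau)}(x-(t-n\tau),n\tau)$, $v^{(\tau)}(x,t)=v^{(\tau)}(x+(t-n\tau),n\tau)$; let $(u^{(\tau)},v^{(\tau)})(x,(n+1)\tau-)$ be the left limit in $t$; and for each $x$ define $(u^{(\tau)},v^{(\tau)})(x,(n+1)\tau)$ as the value at $s=\tau$ of the solution of (N) with value $(u^{(\tau)},v^{(\tau)})(x,(n+1)\tau-)$ at $s=0$ (this is globally well defined). Notation: $(u_j^n,v_j^n)=(u^{(\tau)},v^{(\tau)})(j\tau,n\tau)$,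 $(u_j^{n+1-},v_j^{n+1-})=(u^{(\tau)},v^{(\tau)})(j\tau,(n+1)\tau-)$; $(u_j^{n,2}(s),v_j^{n,2}(s))$, $s\in[0,\tau]$, is the solution of (N) with initial value $(u_j^{n+1-},v_j^{n+1-})$. Comparison quantities: $\mathcal{M}_0=\max_{\mathbb{R}\times[0,T]}(|\hat u|+|\hat v|+1)$, $\mathcal{M}=\max_{\mathbb{R}\times[0,T]}(|\hat u_t|+|\hat u_x|+|\hat v_t|+|\hat v_x|+1)$. For $s\in[0,\tau]$: $\mathcal{U}_j^n(s)=\hat u(j\tau+s,n\tau+s)-u_{j+1}^{n,2}(s)$, $\mathcal{V}_{j+2}^n(s)=\hat v((j+2)\tau-s,n\tau+s)-v_{j+1}^{n,2}(s)$, $\tilde{\mathcal{L}}_j^n(s)=|\mathcal{U}_j^n(s)|^2+|\mathcal{V}_{j+2}^n(s)|^2$, $\tilde{\mathcal{D}}_j^n(s)=|\mathcal{U}_j^n(s)|^2|v_{j+1}^{n,2}(s)|^2+|\mathcal{V}_{j+2}^n(s)|^2|u_{j+1}^{n,2}(s)|^2$. *)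

theory Defs
  imports "HOL-Analysis.Analysis"
begin

definition nldeF :: "real \<Rightarrow> real \<Rightarrow> real \<Rightarrow> complex \<times> complex \<Rightarrow> complex \<times> complex" where
  "nldeF m \<alpha> \<beta> p = (let u = fst p; v = snd p in
     (\<i> * of_real m * v + \<i> * of_real \<alpha> * u * of_real ((cmod v)\<^sup>2)
        + 2 * \<i> * of_real \<beta> * (cnj u * v + u * cnj v) * v,
      \<i> * of_real m * u + \<i> * of_real \<alpha> * v * of_real ((cmod u)\<^sup>2)
        + 2 * \<i> * of_real \<beta> * (cnj u * v + u * cnj v) * u))"

definition flowN :: "real \<Rightarrow> real \<Rightarrow> real \<Rightarrow> real \<Rightarrow> complex \<times> complex \<Rightarrow> complex \<times> complex" where
  "flowN m \<alpha> \<beta> s p = (THE z. \<exists>y. y 0 = p \<and>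
       (\<forall>r\<in>{0..s}. (y has_vector_derivative nldeF m \<alpha> \<beta> (y r)) (at r within {0..s})) \<and>
       y s = z)"

text \<open>Time-splitting scheme. ts_state m a b tau u0 v0 n x is the value at (x, n tau);
  ts_left m a b tau u0 v0 n x is the left limit at (x, (n+1) tau).
  (The parameter s below stands for t - n tau.)\<close>
fun ts_state :: "real \<Rightarrow> real \<Rightarrow> real \<Rightarrow> real \<Rightarrow> (int \<Rightarrow> complex) \<Rightarrow> (int \<Rightarrow> complex)
                  \<Rightarrow> nat \<Rightarrow> real \<Rightarrow> complex \<times> complex" where
  "ts_state m \<alpha> \<beta> \<tau> u0 v0 0 x = (u0 \<lfloor>x / \<tau>\<rfloor>, v0 \<lfloor>x / \<tau>\<rfloor>)"
| "ts_state m \<alpha> \<beta> \<tau> u0 v0 (Suc n) x =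
     flowN m \<alpha> \<beta> \<tau>
       (Lim (at_left \<tau>) (\<lambda>s. fst (ts_state m \<alpha> \<beta> \<tau> u0 v0 n (x - s))),
        Lim (at_left \<tau>) (\<lambda>s. snd (ts_state m \<alpha> \<beta> \<tau> u0 v0 n (x + s))))"

definition ts_left :: "real \<Rightarrow> real \<Rightarrow> real \<Rightarrow> real \<Rightarrow> (int \<Rightarrow> complex) \<Rightarrow> (int \<Rightarrow> complex)
                  \<Rightarrow> nat \<Rightarrow> real \<Rightarrow> complex \<times> complex" where
  "ts_left m \<alpha> \<beta> \<tau> u0 v0 n x =
       (Lim (at_left \<tau>) (\<lambda>s. fst (ts_state m \<alpha> \<beta> \<tau> u0 v0 n (x - s))),
        Lim (at_left \<tau>) (\<lambda>s. snd (ts_state m \<alpha> \<beta> \<tau> u0 v0 n (x + s))))"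

definition nlde_solution ::
  "real \<Rightarrow> real \<Rightarrow> real \<Rightarrow> real \<Rightarrow> (real \<Rightarrow> real \<Rightarrow> complex) \<Rightarrow> (real \<Rightarrow> real \<Rightarrow> complex)
   \<Rightarrow> (real \<Rightarrow> real \<Rightarrow> complex) \<Rightarrow> (real \<Rightarrow> real \<Rightarrow> complex)
   \<Rightarrow> (real \<Rightarrow> real \<Rightarrow> complex) \<Rightarrow> (real \<Rightarrow> real \<Rightarrow> complex) \<Rightarrow> bool" where
  "nlde_solution m \<alpha> \<beta> T uh vh ux ut vx vt \<longleftrightarrow>
     (\<forall>x. \<forall>t\<in>{0..T}.
        ((\<lambda>p. uh (fst p) (snd p)) has_derivative (\<lambda>h. of_real (fst h) * ux x t + of_real (snd h) * ut x t))
           (at (x, t) within UNIV \<times> {0..T}) \<and>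
        ((\<lambda>p. vh (fst p) (snd p)) has_derivative (\<lambda>h. of_real (fst h) * vx x t + of_real (snd h) * vt x t))
           (at (x, t) within UNIV \<times> {0..T}) \<and>
        (ut x t + ux x t, vt x t - vx x t) = nldeF m \<alpha> \<beta> (uh x t, vh x t)) \<and>
     continuous_on (UNIV \<times> {0..T}) (\<lambda>p. ux (fst p) (snd p)) \<and>
     continuous_on (UNIV \<times> {0..T}) (\<lambda>p. ut (fst p) (snd p)) \<and>
     continuous_on (UNIV \<times> {0..T}) (\<lambda>p. vx (fst p) (snd p)) \<and>
     continuous_on (UNIV \<times> {0..T}) (\<lambda>p. vt (fst p) (snd p))"

end

theory Submission
  imports Defs
begin

definition F1 :: "real \<Rightarrow> real \<Rightarrow> real \<Rightarrow> complex \<Rightarrow> complex \<Rightarrow> complex" where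
 "F1 m \<alpha> \<beta> x y = \<i> * of_real m * y + \<i> * of_real (\<alpha> + 2*\<beta>) * x * (y * cnj y) + 2 * \<i> * of_real \<beta> * cnj x * y^2"

lemma cmod_sq_cnj: "complex_of_real ((cmod z)\<^sup>2) = z * cnj z"
  by (metis complex_norm_square of_real_power)

lemma nldeF_eq: "nldeF m \<alpha> \<beta> (u, v) = (F1 m \<alpha> \<beta> u v, F1 m \<alpha> \<beta> v u)"
  unfolding nldeF_def F1_def Let_def cmod_sq_cnj by (simp add: algebra_simps power2_eq_square)

lemma cons: "Re (cnj u * F1 m \<alpha> \<beta> u v) + Re (cnj v * F1 m \<alpha> \<beta> v u) = 0"
  unfolding F1_def by (simp add: algebra_simps power2_eq_square)


lemma integral_pow01:
  assumes "0 \<le> t"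
  shows "integral {0..t} (\<lambda>r::real. r ^ n) = t ^ Suc n / Suc n"
proof -
  have d: "((\<lambda>x::real. x ^ Suc n / Suc n) has_real_derivative x ^ n) (at x)" for x
    by (intro derivative_eq_intros) (auto simp: field_simps simp del: of_nat_Suc)
  have "((\<lambda>r::real. r ^ n) has_integral (t ^ Suc n / Suc n - 0 ^ Suc n / Suc n)) {0..t}"
    by (rule fundamental_theorem_of_calculus[OF assms])
       (use d in \<open>auto simp: has_real_derivative_iff_has_vector_derivative[symmetric] intro: has_field_derivative_at_within\<close>)
  then show ?thesis by (simp add: integral_unique)
qed

lemma picard_exists:
  fixes G :: "'a::euclidean_space \<Rightarrow> 'a" and p :: 'a
  assumes lip: "\<And>x y. norm (G x - G y) \<le> L * norm (x - y)"
    and bnd: "\<And>x. norm (G x) \<le> B" and L0: "0 \<le> L" and B0: "0 \<le> B" and S0: "0 \<le> S"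
  shows "\<exists>y. y 0 = p \<and> (\<forall>t\<in>{0..S}. (y has_vector_derivative G (y t)) (at t within {0..S}))"
proof -
  have contG: "continuous_on UNIV G"
    by (rule lipschitz_on_continuous_on[of L]) (auto simp: lipschitz_on_def dist_norm L0 lip)
  define Phi where "Phi = (\<lambda>f::real\<Rightarrow>'a. \<lambda>t. p + integral {0..t} (\<lambda>r. G (f r)))"
  define pic where "pic k = (Phi ^^ k) (\<lambda>t. p)" for k
  have pic0: "pic 0 = (\<lambda>t. p)" by (simp add: pic_def)
  have picS: "pic (Suc k) t = p + integral {0..t} (\<lambda>r. G (pic k r))" for k t
    by (simp add: pic_def Phi_def)
  have cint: "continuous_on {0..S} (\<lambda>u. integral {0..u} (\<lambda>r. G (f r)))"
    if "continuous_on {0..S} f" for f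
  proof -
    have cg: "continuous_on {0..S} (\<lambda>r. G (f r))"
      by (rule continuous_on_compose2[OF contG that]) auto
    show ?thesis unfolding continuous_on_eq_continuous_within
      using integral_has_vector_derivative[OF cg] has_vector_derivative_continuous by blast
  qed
  have cont: "continuous_on {0..S} (pic k)" for k
  proof (induction k)
    case 0 then show ?case by (simp add: pic0)
  next
    case (Suc k)
    have "continuous_on {0..S} (\<lambda>t. p + integral {0..t} (\<lambda>r. G (pic k r)))"
      by (intro continuous_on_add continuous_on_const cint Suc)
    then show ?case by (simp add: picS[abs_def])
  qed
  have contGp: "continuous_on {0..S} (\<lambda>r. G (pic k r))" for k
    by (rule continuous_on_compose2[OF contG cont]) auto
  have intg: "(\<lambda>r. G (pic k r)) integrable_on {0..t}" if "t \<le> S" for k t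
    by (rule integrable_continuous_interval, rule continuous_on_subset[OF contGp]) (use that in auto)
  have bound: "norm (pic (Suc k) t - pic k t) \<le> B * L^k * t^(Suc k) / fact (Suc k)"
    if "t \<in> {0..S}" for k t
    using that
  proof (induction k arbitrary: t)
    case 0
    then show ?case using bnd[of p] by (simp add: picS pic0) (metis mult.commute mult_left_mono)
  next
    case (Suc k)
    have t: "0 \<le> t" "t \<le> S" using Suc.prems by auto
    have "pic (Suc (Suc k)) t - pic (Suc k) t
        = integral {0..t} (\<lambda>r. G (pic (Suc k) r) - G (pic k r))"
      by (subst (1 2) picS) (simp add: integral_diff[OF intg intg] t)
    also have "norm \<dots> \<le> integral {0..t} (\<lambda>r. L * (B * L^k * r^(Suc k) / fact (Suc k)))"
    proof (rule integral_norm_bound_integral)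
      show "(\<lambda>r. G (pic (Suc k) r) - G (pic k r)) integrable_on {0..t}"
        by (intro integrable_diff intg t)
      show "(\<lambda>r. L * (B * L ^ k * r ^ Suc k / fact (Suc k))) integrable_on {0..t}"
        by (intro integrable_continuous_interval continuous_intros) auto
      fix r assume r: "r \<in> {0..t}"
      have "norm (G (pic (Suc k) r) - G (pic k r)) \<le> L * norm (pic (Suc k) r - pic k r)"
        by (rule lip)
      also have "\<dots> \<le> L * (B * L^k * r^(Suc k) / fact (Suc k))"
        by (rule mult_left_mono[OF Suc.IH L0]) (use r t in auto)
      finally show "norm (G (pic (Suc k) r) - G (pic k r)) \<le> L * (B * L ^ k * r ^ Suc k / fact (Suc k))" .
    qed
    also have "\<dots> = integral {0..t} (\<lambda>r. (L * B * L^k / fact (Suc k)) *\<^sub>R r^(Suc k))"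
      by (rule integral_cong) simp
    also have "\<dots> = (L * B * L^k / fact (Suc k)) * integral {0..t} (\<lambda>r. r^(Suc k))"
      by (simp only: integral_cmul) simp
    also have "\<dots> = B * L^Suc k * t^(Suc (Suc k)) / fact (Suc (Suc k))"
      by (subst integral_pow01[OF t(1)], subst (2) fact_Suc, simp add: field_simps del: fact_Suc of_nat_Suc)
    finally show ?case .
  qed
  define f where "f i t = pic (Suc i) t - pic i t" for i t
  define M where "M i = B * S * ((L * S)^i / fact i)" for i
  have fM: "norm (f i t) \<le> M i" if "t \<in> {0..S}" for i t
  proof -
    have "norm (f i t) \<le> B * L^i * t^(Suc i) / fact (Suc i)" using bound[OF that] by (simp add: f_def)
    also have "\<dots> \<le> B * L^i * S^(Suc i) / fact (Suc i)"
      using that by (intro divide_right_mono mult_left_mono power_mono) (auto simp: B0 L0)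
    also have "\<dots> \<le> B * L^i * S^(Suc i) / fact i"
      by (intro divide_left_mono mult_nonneg_nonneg) (auto simp: B0 L0 S0 fact_mono)
    also have "\<dots> = M i" by (simp add: M_def power_mult_distrib)
    finally show ?thesis .
  qed
  have sM: "summable M"
    unfolding M_def using summable_exp[of "L*S"]
    by (intro summable_mult) (simp add: field_simps)
  have ul: "uniform_limit {0..S} (\<lambda>n t. \<Sum>i<n. f i t) (\<lambda>t. suminf (\<lambda>i. f i t)) sequentially"
    by (rule Weierstrass_m_test[OF fM sM])
  define y where "y t = p + suminf (\<lambda>i. f i t)" for t
  have tel: "(\<lambda>n t. p + (\<Sum>i<n. f i t)) = pic"
  proof -
    have "(\<Sum>i<n. pic (Suc i) t - pic i t) = pic n t - pic 0 t" for n t by (induction n) auto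
    then show ?thesis by (simp add: f_def pic0 fun_eq_iff)
  qed
  have ul2: "uniform_limit {0..S} pic y sequentially"
    unfolding tel[symmetric] y_def by (intro uniform_limit_add uniform_limit_const ul)
  have conty: "continuous_on {0..S} y"
    by (rule uniform_limit_theorem[OF _ ul2]) (auto simp: cont)
  have contGy: "continuous_on {0..S} (\<lambda>r. G (y r))"
    by (rule continuous_on_compose2[OF contG conty]) auto
  have eqn: "y t = p + integral {0..t} (\<lambda>r. G (y r))" if t: "t \<in> {0..S}" for t
  proof -
    have intgy: "(\<lambda>r. G (y r)) integrable_on {0..t}"
      by (rule integrable_continuous_interval, rule continuous_on_subset[OF contGy]) (use that in auto)
    have l1: "(\<lambda>n. pic (Suc n) t) \<longlonglongrightarrow> y t"
      using tendsto_uniform_limitI[OF ul2 that] by (rule LIMSEQ_Suc)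
    have l2: "(\<lambda>n. pic (Suc n) t) \<longlonglongrightarrow> p + integral {0..t} (\<lambda>r. G (y r))"
    proof (rule tendstoI)
      fix e :: real assume e: "0 < e"
      define e' where "e' = e / (L * S + 1)"
      have e': "0 < e'" using e L0 S0 by (simp add: e'_def add_nonneg_pos)
      have ev: "\<forall>\<^sub>F n in sequentially. \<forall>x\<in>{0..S}. dist (pic n x) (y x) < e'"
        using uniform_limitD[OF ul2 e'] .
      show "\<forall>\<^sub>F n in sequentially. dist (pic (Suc n) t) (p + integral {0..t} (\<lambda>r. G (y r))) < e"
        using ev
      proof eventually_elim
        case (elim n)
        have "dist (pic (Suc n) t) (p + integral {0..t} (\<lambda>r. G (y r)))
            = norm (integral {0..t} (\<lambda>r. G (pic n r) - G (y r)))"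
          using t by (simp add: picS dist_norm integral_diff[OF intg intgy])
        also have "\<dots> \<le> integral {0..t} (\<lambda>r. L * e')"
        proof (rule integral_norm_bound_integral)
          show "(\<lambda>r. G (pic n r) - G (y r)) integrable_on {0..t}"
            using t by (intro integrable_diff intg intgy) auto
          fix r assume r: "r \<in> {0..t}"
          have "norm (G (pic n r) - G (y r)) \<le> L * norm (pic n r - y r)" by (rule lip)
          also have "\<dots> \<le> L * e'"
            using elim r t by (intro mult_left_mono L0) (auto simp: dist_norm less_imp_le)
          finally show "norm (G (pic n r) - G (y r)) \<le> L * e'" .
        qed auto
        also have "\<dots> = t * (L * e')" using t by simp
        also have "\<dots> \<le> S * (L * e')" using t e' L0 by (intro mult_right_mono) auto
        also have "\<dots> < e"
        proof -
          have "S * (L * e') = e * (L * S) / (L * S + 1)" by (simp add: e'_def field_simps)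
          also have "\<dots> < e"
          proof -
            have pos: "0 < L * S + 1" using L0 S0 by (simp add: add_nonneg_pos)
            have "e * (L * S) < e * (L * S + 1)" using e by simp
            then show ?thesis using pos by (simp add: divide_less_eq)
          qed
          finally show ?thesis .
        qed
        finally show ?case .
      qed
    qed
    show ?thesis using LIMSEQ_unique[OF l1 l2] .
  qed
  have "y 0 = p" using eqn[of 0] S0 by simp
  moreover have "(y has_vector_derivative G (y t)) (at t within {0..S})" if t: "t \<in> {0..S}" for t
  proof -
    have "((\<lambda>u. p + integral {0..u} (\<lambda>r. G (y r))) has_vector_derivative G (y t)) (at t within {0..S})"
      using integral_has_vector_derivative[OF contGy t]
      by (intro derivative_eq_intros) auto
    then show ?thesis
      by (rule has_vector_derivative_transform[OF t, rotated]) (simp add: eqn)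
  qed
  ultimately show ?thesis by blast
qed


lemma nsq_deriv:
  assumes "(y has_vector_derivative D) (at t within s)"
  shows "((\<lambda>r. inner (y r) (y r)) has_real_derivative (2 * inner (y t) D)) (at t within s)"
  unfolding has_field_derivative_def
  using has_derivative_inner[OF assms[unfolded has_vector_derivative_def] assms[unfolded has_vector_derivative_def]]
  by (rule has_derivative_eq_rhs) (auto simp: fun_eq_iff inner_commute algebra_simps)

lemma deriv_le_mono:
  fixes g :: "real \<Rightarrow> real"
  assumes d: "\<And>r. r \<in> {0..S} \<Longrightarrow> (g has_real_derivative g' r) (at r within {0..S})"
    and le: "\<And>r. r \<in> {0..S} \<Longrightarrow> g' r \<le> 0" and t: "t \<in> {0..S}"
  shows "g t \<le> g 0"
proof -
  have "\<exists>x\<in>{0..t}. g t - g 0 = (\<lambda>h. g' x * h) (t - 0)"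
  proof (rule mvt_very_simple)
    show "0 \<le> t" using t by simp
    fix x assume "0 \<le> x" "x \<le> t"
    then have "(g has_real_derivative g' x) (at x within {0..t})"
      using d[of x] t by (auto intro: DERIV_subset)
    then show "(g has_derivative (\<lambda>h. g' x * h)) (at x within {0..t})"
      by (simp add: has_field_derivative_def)
  qed
  then obtain x where x: "x \<in> {0..t}" "g t - g 0 = g' x * t" by auto
  have "g' x * t \<le> 0" using le[of x] x t by (auto intro: mult_nonpos_nonneg)
  then show ?thesis using x by simp
qed

lemma gronwall:
  fixes \<phi> :: "real \<Rightarrow> real"
  assumes k: "0 \<le> k" and c: "0 \<le> c"
    and d: "\<And>r. r \<in> {0..S} \<Longrightarrow> (\<phi> has_real_derivative \<phi>' r) (at r within {0..S})"
    and le: "\<And>r. r \<in> {0..S} \<Longrightarrow> \<phi>' r \<le> k * \<phi> r + c" and t: "t \<in> {0..S}"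
  shows "\<phi> t \<le> exp (k * t) * (\<phi> 0 + c * t)"
proof -
  define g where "g r = exp (- k * r) * \<phi> r - c * r" for r
  have "g t \<le> g 0"
  proof (rule deriv_le_mono[OF _ _ t])
    fix r assume r: "r \<in> {0..S}"
    show "(g has_real_derivative (exp (- k * r) * (\<phi>' r - k * \<phi> r) - c)) (at r within {0..S})"
      unfolding g_def using d[OF r]
      by (auto intro!: derivative_eq_intros simp: algebra_simps)
    have "exp (- k * r) \<le> 1" using k r by (simp add: mult_nonneg_nonneg)
    moreover have "\<phi>' r - k * \<phi> r \<le> c" using le[OF r] by simp
    ultimately have "exp (- k * r) * (\<phi>' r - k * \<phi> r) \<le> c"
      by (smt (verit, best) c exp_gt_zero mult_left_mono mult_left_le_one_le mult_nonneg_nonneg)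
    then show "exp (- k * r) * (\<phi>' r - k * \<phi> r) - c \<le> 0" by simp
  qed
  then have "exp (- k * t) * \<phi> t \<le> \<phi> 0 + c * t" by (simp add: g_def)
  then have "exp (k * t) * (exp (- k * t) * \<phi> t) \<le> exp (k * t) * (\<phi> 0 + c * t)"
    by (rule mult_left_mono) simp
  then show ?thesis by (simp add: exp_minus field_simps)
qed


lemma triple_diff:
  fixes a b c a' b' c' :: complex
  assumes "cmod a \<le> R" "cmod b \<le> R" "cmod c \<le> R" "cmod a' \<le> R" "cmod b' \<le> R" "cmod c' \<le> R"
  shows "cmod (a*b*c - a'*b'*c') \<le> R\<^sup>2 * (cmod (a - a') + cmod (b - b') + cmod (c - c'))"
proof -
  have R0: "0 \<le> R" using assms(1) norm_ge_zero order_trans by blast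
  have eq: "a*b*c - a'*b'*c' = (a - a')*(b*c) + (b - b')*(a'*c) + (c - c')*(a'*b')"
    by (simp add: algebra_simps)
  have "cmod (a*b*c - a'*b'*c') \<le> cmod ((a - a')*(b*c)) + cmod ((b - b')*(a'*c)) + cmod ((c - c')*(a'*b'))"
    unfolding eq by (meson norm_triangle_le add_mono order_refl)
  also have "\<dots> \<le> cmod (a - a') * R\<^sup>2 + cmod (b - b') * R\<^sup>2 + cmod (c - c') * R\<^sup>2"
    unfolding norm_mult power2_eq_square
    by (intro add_mono mult_left_mono mult_mono) (use assms R0 in auto)
  finally show ?thesis by (simp add: algebra_simps)
qed

definition Kl :: "real \<Rightarrow> real \<Rightarrow> real \<Rightarrow> real \<Rightarrow> real" where
  "Kl m \<alpha> \<beta> R = \<bar>m\<bar> + (2 * \<bar>\<alpha> + 2*\<beta>\<bar> + 4 * \<bar>\<beta>\<bar>) * R\<^sup>2"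

lemma Kl_nonneg: "0 \<le> Kl m \<alpha> \<beta> R" by (simp add: Kl_def)

lemma Kl_mono: "\<bar>R\<bar> \<le> \<bar>R'\<bar> \<Longrightarrow> Kl m \<alpha> \<beta> R \<le> Kl m \<alpha> \<beta> R'"
  unfolding Kl_def by (intro add_left_mono mult_left_mono) (auto simp: abs_le_square_iff)

lemma F1_lip:
  assumes "cmod x \<le> R" "cmod y \<le> R" "cmod x' \<le> R" "cmod y' \<le> R"
  shows "cmod (F1 m \<alpha> \<beta> x y - F1 m \<alpha> \<beta> x' y') \<le> Kl m \<alpha> \<beta> R * (cmod (x - x') + cmod (y - y'))"
proof -
  have eq: "F1 m \<alpha> \<beta> x y - F1 m \<alpha> \<beta> x' y' = (\<i> * of_real m) * (y - y')
      + (\<i> * of_real (\<alpha> + 2*\<beta>)) * (x * y * cnj y - x' * y' * cnj y')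
      + (2 * \<i> * of_real \<beta>) * (cnj x * y * y - cnj x' * y' * y')"
    unfolding F1_def by (simp add: algebra_simps power2_eq_square)
  have t1: "cmod (x * y * cnj y - x' * y' * cnj y') \<le> R\<^sup>2 * (cmod (x - x') + cmod (y - y') + cmod (cnj y - cnj y'))"
    by (rule triple_diff) (use assms in auto)
  have t2: "cmod (cnj x * y * y - cnj x' * y' * y') \<le> R\<^sup>2 * (cmod (cnj x - cnj x') + cmod (y - y') + cmod (y - y'))"
    by (rule triple_diff) (use assms in auto)
  have c1: "cmod (cnj y - cnj y') = cmod (y - y')" by (metis complex_cnj_diff complex_mod_cnj)
  have c2: "cmod (cnj x - cnj x') = cmod (x - x')" by (metis complex_cnj_diff complex_mod_cnj)
  let ?A = "cmod (x - x')" and ?B = "cmod (y - y')"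
  have n1: "cmod ((\<i> * of_real m) * (y - y')) = \<bar>m\<bar> * ?B" by (simp add: norm_mult)
  have n2: "cmod ((\<i> * of_real (\<alpha> + 2*\<beta>)) * (x * y * cnj y - x' * y' * cnj y'))
      \<le> \<bar>\<alpha> + 2*\<beta>\<bar> * (R\<^sup>2 * (?A + ?B + ?B))"
    unfolding norm_mult norm_ii norm_of_real using t1 c1 by (simp add: mult_left_mono del: of_real_add)
  have n3: "cmod ((2 * \<i> * of_real \<beta>) * (cnj x * y * y - cnj x' * y' * y'))
      \<le> 2 * \<bar>\<beta>\<bar> * (R\<^sup>2 * (?A + ?B + ?B))"
    unfolding norm_mult norm_ii norm_of_real using t2 c2 by (simp add: mult_left_mono)
  have "cmod (F1 m \<alpha> \<beta> x y - F1 m \<alpha> \<beta> x' y') \<le> \<bar>m\<bar> * ?B + \<bar>\<alpha> + 2*\<beta>\<bar> * (R\<^sup>2 * (?A + ?B + ?B))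
        + 2 * \<bar>\<beta>\<bar> * (R\<^sup>2 * (?A + ?B + ?B))"
    unfolding eq using n1 n2 n3 norm_triangle_ineq
    by (smt (verit, best))
  also have "\<dots> \<le> Kl m \<alpha> \<beta> R * (?A + ?B)"
  proof -
    have A0: "0 \<le> ?A" by simp
    have h1: "\<bar>m\<bar> * ?B \<le> \<bar>m\<bar> * (?A + ?B)" by (rule mult_left_mono) auto
    have h2: "R\<^sup>2 * (?A + ?B + ?B) \<le> 2 * (R\<^sup>2 * (?A + ?B))"
      using mult_nonneg_nonneg[OF zero_le_power2[of R] A0] by (simp add: algebra_simps)
    have h3: "\<bar>\<alpha> + 2*\<beta>\<bar> * (R\<^sup>2 * (?A + ?B + ?B)) \<le> \<bar>\<alpha> + 2*\<beta>\<bar> * (2 * (R\<^sup>2 * (?A + ?B)))"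
      by (rule mult_left_mono[OF h2]) auto
    have h4: "2 * \<bar>\<beta>\<bar> * (R\<^sup>2 * (?A + ?B + ?B)) \<le> 2 * \<bar>\<beta>\<bar> * (2 * (R\<^sup>2 * (?A + ?B)))"
      by (rule mult_left_mono[OF h2]) auto
    have e: "Kl m \<alpha> \<beta> R * (?A + ?B) = \<bar>m\<bar> * (?A + ?B) + \<bar>\<alpha> + 2*\<beta>\<bar> * (2 * (R\<^sup>2 * (?A + ?B)))
       + 2 * \<bar>\<beta>\<bar> * (2 * (R\<^sup>2 * (?A + ?B)))"
      unfolding Kl_def by (simp add: algebra_simps)
    show ?thesis unfolding e using h1 h3 h4 by linarith
  qed
  finally show ?thesis .
qed

lemma nldeF_lip:
  assumes "norm p \<le> R" "norm q \<le> R"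
  shows "norm (nldeF m \<alpha> \<beta> p - nldeF m \<alpha> \<beta> q) \<le> 4 * Kl m \<alpha> \<beta> R * norm (p - q)"
proof -
  obtain x y where p: "p = (x, y)" by force
  obtain x' y' where q: "q = (x', y')" by force
  have b: "cmod x \<le> R" "cmod y \<le> R" "cmod x' \<le> R" "cmod y' \<le> R"
    using assms norm_fst_le[of x y] norm_snd_le[of y x] norm_fst_le[of x' y'] norm_snd_le[of y' x'] p q
    by auto
  have d: "cmod (x - x') \<le> norm (p - q)" "cmod (y - y') \<le> norm (p - q)"
    using p q norm_fst_le[of "x - x'" "y - y'"] norm_snd_le[of "y - y'" "x - x'"] by auto
  have K0: "0 \<le> Kl m \<alpha> \<beta> R" by (rule Kl_nonneg)
  have "norm (nldeF m \<alpha> \<beta> p - nldeF m \<alpha> \<beta> q)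
     \<le> cmod (F1 m \<alpha> \<beta> x y - F1 m \<alpha> \<beta> x' y') + cmod (F1 m \<alpha> \<beta> y x - F1 m \<alpha> \<beta> y' x')"
    by (simp add: p q nldeF_eq norm_Pair_le)
  also have "\<dots> \<le> Kl m \<alpha> \<beta> R * (cmod (x - x') + cmod (y - y')) + Kl m \<alpha> \<beta> R * (cmod (y - y') + cmod (x - x'))"
    by (intro add_mono F1_lip b)
  also have "\<dots> \<le> Kl m \<alpha> \<beta> R * (2 * norm (p - q)) + Kl m \<alpha> \<beta> R * (2 * norm (p - q))"
    using d by (intro add_mono mult_left_mono K0) auto
  finally show ?thesis by (simp add: algebra_simps)
qed

lemma nldeF_zero: "nldeF m \<alpha> \<beta> 0 = 0"
  by (simp add: nldeF_def zero_prod_def)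

lemma nldeF_cons: "inner p (nldeF m \<alpha> \<beta> p) = 0"
proof -
  obtain u v where p: "p = (u, v)" by force
  have "Re (cnj u * F1 m \<alpha> \<beta> u v) + Re (cnj v * F1 m \<alpha> \<beta> v u) = 0" by (rule cons)
  then show ?thesis by (simp add: p nldeF_eq inner_complex_def)
qed


definition rad :: "real \<Rightarrow> 'a::real_normed_vector \<Rightarrow> 'a" where
  "rad R q = (if norm q \<le> R then q else (R / norm q) *\<^sub>R q)"

lemma rad_cp:
  fixes q :: "'a::euclidean_space"
  assumes R: "0 \<le> R" shows "rad R q = closest_point (cball 0 R) q"
proof (cases "norm q \<le> R")
  case True then show ?thesis by (simp add: rad_def closest_point_self)
next
  case False
  then have q: "norm q > R" "norm q > 0" using R by auto
  have nr: "norm ((R / norm q) *\<^sub>R q) = R" using q R by simp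
  have "(R / norm q) *\<^sub>R q = closest_point (cball 0 R) q"
  proof (rule closest_point_unique)
    show "(R / norm q) *\<^sub>R q \<in> cball 0 R" using nr by simp
    have d: "dist q ((R / norm q) *\<^sub>R q) = norm q - R"
    proof -
      have "q - (R / norm q) *\<^sub>R q = (1 - R / norm q) *\<^sub>R q" by (simp add: algebra_simps)
      then have "dist q ((R / norm q) *\<^sub>R q) = \<bar>1 - R / norm q\<bar> * norm q" by (simp add: dist_norm)
      also have "\<dots> = norm q - R" using q by (simp add: field_simps abs_if)
      finally show ?thesis .
    qed
    show "\<forall>z\<in>cball 0 R. dist q ((R / norm q) *\<^sub>R q) \<le> dist q z"
    proof
      fix z :: 'a assume "z \<in> cball 0 R"
      then have "norm z \<le> R" by simp
      moreover have "norm q - norm z \<le> dist q z" by (metis dist_norm norm_triangle_ineq2)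
      ultimately show "dist q ((R / norm q) *\<^sub>R q) \<le> dist q z" using d by simp
    qed
  qed auto
  then show ?thesis using False by (simp add: rad_def)
qed

lemma rad_lip:
  fixes x y :: "'a::euclidean_space"
  assumes "0 \<le> R" shows "norm (rad R x - rad R y) \<le> norm (x - y)"
  using closest_point_lipschitz[of "cball (0::'a) R" x y] assms
  by (simp add: rad_cp dist_norm)

lemma rad_norm: "0 \<le> R \<Longrightarrow> norm (rad R q) \<le> R"
  by (simp add: rad_def)

lemma rad_cons: "0 \<le> R \<Longrightarrow> inner q (nldeF m \<alpha> \<beta> (rad R q)) = 0"
proof (cases "norm q \<le> R")
  case True then show ?thesis by (simp add: rad_def nldeF_cons)
next
  case False
  assume R: "0 \<le> R"
  define c where "c = R / norm q"
  have r: "rad R q = c *\<^sub>R q" using False by (simp add: rad_def c_def)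
  show ?thesis
  proof (cases "c = 0")
    case True then show ?thesis by (simp add: r nldeF_zero)
  next
    case False
    have "q = (1 / c) *\<^sub>R (c *\<^sub>R q)" using False by simp
    then have "inner q (nldeF m \<alpha> \<beta> (c *\<^sub>R q)) = (1/c) * inner (c *\<^sub>R q) (nldeF m \<alpha> \<beta> (c *\<^sub>R q))"
      by (metis inner_scaleR_left)
    then show ?thesis by (simp add: r nldeF_cons)
  qed
qed

lemma const_of_deriv0:
  fixes \<phi> :: "real \<Rightarrow> real"
  assumes d: "\<And>r. r \<in> {0..S} \<Longrightarrow> (\<phi> has_real_derivative 0) (at r within {0..S})"
    and t: "t \<in> {0..S}"
  shows "\<phi> t = \<phi> 0"
proof -
  have "\<phi> t \<le> \<phi> 0" by (rule deriv_le_mono[OF d _ t]) auto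
  moreover have "- \<phi> t \<le> - \<phi> 0"
    by (rule deriv_le_mono[where g = "\<lambda>r. - \<phi> r" and g' = "\<lambda>r. 0", OF _ _ t])
       (use d in \<open>auto intro!: derivative_eq_intros\<close>)
  ultimately show ?thesis by simp
qed

lemma flow_exists:
  assumes S0: "0 \<le> S"
  shows "\<exists>y. y 0 = p \<and> (\<forall>t\<in>{0..S}. (y has_vector_derivative nldeF m \<alpha> \<beta> (y t)) (at t within {0..S}))"
proof -
  define R where "R = norm p"
  have R0: "0 \<le> R" by (simp add: R_def)
  define K where "K = 4 * Kl m \<alpha> \<beta> R"
  have K0: "0 \<le> K" by (simp add: K_def Kl_nonneg)
  define G where "G q = nldeF m \<alpha> \<beta> (rad R q)" for q
  have lip: "norm (G x - G y) \<le> K * norm (x - y)" for x y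
  proof -
    have "norm (G x - G y) \<le> K * norm (rad R x - rad R y)"
      unfolding G_def K_def by (rule nldeF_lip) (use rad_norm R0 in auto)
    also have "\<dots> \<le> K * norm (x - y)" by (rule mult_left_mono[OF rad_lip[OF R0] K0])
    finally show ?thesis .
  qed
  have bnd: "norm (G x) \<le> K * R" for x
  proof -
    have "norm (G x) = norm (nldeF m \<alpha> \<beta> (rad R x) - nldeF m \<alpha> \<beta> 0)" by (simp add: G_def nldeF_zero)
    also have "\<dots> \<le> K * norm (rad R x - 0)"
      unfolding K_def by (rule nldeF_lip) (use rad_norm R0 in auto)
    also have "\<dots> \<le> K * R" using mult_left_mono[OF rad_norm[OF R0] K0] by simp
    finally show ?thesis .
  qed
  obtain y where y0: "y 0 = p" and yd: "\<forall>t\<in>{0..S}. (y has_vector_derivative G (y t)) (at t within {0..S})"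
    using picard_exists[OF lip bnd K0 mult_nonneg_nonneg[OF K0 R0] S0] by blast
  have nrm: "inner (y t) (y t) = inner (y 0) (y 0)" if t: "t \<in> {0..S}" for t
  proof (rule const_of_deriv0[OF _ t])
    fix r assume r: "r \<in> {0..S}"
    have "((\<lambda>r. inner (y r) (y r)) has_real_derivative (2 * inner (y r) (G (y r)))) (at r within {0..S})"
      by (rule nsq_deriv) (use yd r in auto)
    then show "((\<lambda>r. inner (y r) (y r)) has_real_derivative 0) (at r within {0..S})"
      by (simp add: G_def rad_cons[OF R0])
  qed
  have "G (y t) = nldeF m \<alpha> \<beta> (y t)" if t: "t \<in> {0..S}" for t
  proof -
    have "norm (y t) ^ 2 = norm p ^ 2" using nrm[OF t] y0 by (simp add: power2_norm_eq_inner)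
    then have "norm (y t) = R" by (simp add: R_def power2_eq_iff_nonneg)
    then show ?thesis by (simp add: G_def rad_def)
  qed
  then show ?thesis using y0 yd by auto
qed

lemma sol_norm:
  assumes y0: "y 0 = p"
    and yd: "\<forall>t\<in>{0..S}. (y has_vector_derivative nldeF m \<alpha> \<beta> (y t)) (at t within {0..S})"
    and t: "t \<in> {0..S}"
  shows "norm (y t) = norm p"
proof -
  have "inner (y t) (y t) = inner (y 0) (y 0)"
  proof (rule const_of_deriv0[OF _ t])
    fix r assume r: "r \<in> {0..S}"
    have "((\<lambda>r. inner (y r) (y r)) has_real_derivative (2 * inner (y r) (nldeF m \<alpha> \<beta> (y r)))) (at r within {0..S})"
      by (rule nsq_deriv) (use yd r in auto)
    then show "((\<lambda>r. inner (y r) (y r)) has_real_derivative 0) (at r within {0..S})"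
      by (simp add: nldeF_cons)
  qed
  then have "norm (y t) ^ 2 = norm p ^ 2" using y0 by (simp add: power2_norm_eq_inner)
  then show ?thesis by (simp add: power2_eq_iff_nonneg)
qed

lemma sol_unique:
  assumes y0: "y 0 = p" and z0: "z 0 = p"
    and yd: "\<forall>t\<in>{0..S}. (y has_vector_derivative nldeF m \<alpha> \<beta> (y t)) (at t within {0..S})"
    and zd: "\<forall>t\<in>{0..S}. (z has_vector_derivative nldeF m \<alpha> \<beta> (z t)) (at t within {0..S})"
    and t: "t \<in> {0..S}"
  shows "y t = z t"
proof -
  define R where "R = norm p"
  define K where "K = 4 * Kl m \<alpha> \<beta> R"
  have K0: "0 \<le> K" by (simp add: K_def Kl_nonneg)
  define w where "w r = y r - z r" for r
  have wd: "(w has_vector_derivative (nldeF m \<alpha> \<beta> (y r) - nldeF m \<alpha> \<beta> (z r))) (at r within {0..S})"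
    if "r \<in> {0..S}" for r
    unfolding w_def using yd zd that by (auto intro!: derivative_eq_intros)
  have "inner (w t) (w t) \<le> exp ((2*K) * t) * (inner (w 0) (w 0) + 0 * t)"
  proof (rule gronwall[OF _ _ _ _ t])
    show "0 \<le> 2 * K" using K0 by simp
    fix r assume r: "r \<in> {0..S}"
    show "((\<lambda>r. inner (w r) (w r)) has_real_derivative (2 * inner (w r) (nldeF m \<alpha> \<beta> (y r) - nldeF m \<alpha> \<beta> (z r)))) (at r within {0..S})"
      by (rule nsq_deriv[OF wd[OF r]])
    have "inner (w r) (nldeF m \<alpha> \<beta> (y r) - nldeF m \<alpha> \<beta> (z r))
        \<le> norm (w r) * norm (nldeF m \<alpha> \<beta> (y r) - nldeF m \<alpha> \<beta> (z r))"
      by (rule norm_cauchy_schwarz)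
    also have "\<dots> \<le> norm (w r) * (K * norm (w r))"
      unfolding K_def w_def
      by (intro mult_left_mono nldeF_lip) (use sol_norm[OF y0 yd r] sol_norm[OF z0 zd r] R_def in auto)
    finally show "2 * inner (w r) (nldeF m \<alpha> \<beta> (y r) - nldeF m \<alpha> \<beta> (z r)) \<le> 2 * K * inner (w r) (w r) + 0"
      by (simp add: power2_norm_eq_inner[symmetric] power2_eq_square algebra_simps)
  qed auto
  then have "inner (w t) (w t) \<le> 0" using y0 z0 by (simp add: w_def)
  then have "inner (w t) (w t) = 0" using inner_ge_zero[of "w t"] by linarith
  then show ?thesis by (simp add: w_def)
qed

lemma flowN_eq:
  assumes y0: "y 0 = p"
    and yd: "\<forall>t\<in>{0..S}. (y has_vector_derivative nldeF m \<alpha> \<beta> (y t)) (at t within {0..S})"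
    and s: "s \<in> {0..S}"
  shows "flowN m \<alpha> \<beta> s p = y s"
  unfolding flowN_def
proof (rule the_equality)
  have sub: "{0..s} \<subseteq> {0..S}" using s by auto
  show "\<exists>y'. y' 0 = p \<and> (\<forall>r\<in>{0..s}. (y' has_vector_derivative nldeF m \<alpha> \<beta> (y' r)) (at r within {0..s})) \<and> y' s = y s"
  proof (rule exI[of _ y], intro conjI ballI)
    fix r assume "r \<in> {0..s}"
    then have "r \<in> {0..S}" using sub by auto
    then show "(y has_vector_derivative nldeF m \<alpha> \<beta> (y r)) (at r within {0..s})"
      using yd has_vector_derivative_within_subset[OF _ sub] by blast
  qed (use y0 in auto)
  fix zz assume "\<exists>y'. y' 0 = p \<and> (\<forall>r\<in>{0..s}. (y' has_vector_derivative nldeF m \<alpha> \<beta> (y' r)) (at r within {0..s})) \<and> y' s = zz"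
  then obtain y' where y': "y' 0 = p" "\<forall>r\<in>{0..s}. (y' has_vector_derivative nldeF m \<alpha> \<beta> (y' r)) (at r within {0..s})" "y' s = zz"
    by blast
  have "y' s = y s"
  proof (rule sol_unique[where y=y' and z=y and S=s and p=p, OF y'(1) y0 y'(2)])
    show "\<forall>t\<in>{0..s}. (y has_vector_derivative nldeF m \<alpha> \<beta> (y t)) (at t within {0..s})"
    proof
      fix r assume "r \<in> {0..s}"
      then have "r \<in> {0..S}" using sub by auto
      then show "(y has_vector_derivative nldeF m \<alpha> \<beta> (y r)) (at r within {0..s})"
        using yd has_vector_derivative_within_subset[OF _ sub] by blast
    qed
  qed (use s in auto)
  then show "zz = y s" using y'(3) by simp
qed

lemma flowN_sol:
  assumes S0: "0 \<le> S"
  shows "\<exists>y. y 0 = p \<and> (\<forall>t\<in>{0..S}. (y has_vector_derivative nldeF m \<alpha> \<beta> (y t)) (at t within {0..S}))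
           \<and> (\<forall>s\<in>{0..S}. flowN m \<alpha> \<beta> s p = y s)"
  using flow_exists[OF S0, of p m \<alpha> \<beta>] flowN_eq by blast

lemma flowN_norm:
  assumes "0 \<le> s" shows "norm (flowN m \<alpha> \<beta> s p) = norm p"
proof -
  obtain y where y: "y 0 = p" "\<forall>t\<in>{0..s}. (y has_vector_derivative nldeF m \<alpha> \<beta> (y t)) (at t within {0..s})"
    "\<forall>r\<in>{0..s}. flowN m \<alpha> \<beta> r p = y r"
    using flowN_sol[OF assms] by blast
  show ?thesis using y sol_norm[OF y(1) y(2), of s] assms by auto
qed


fun cell :: "real \<Rightarrow> real \<Rightarrow> real \<Rightarrow> real \<Rightarrow> (int \<Rightarrow> complex) \<Rightarrow> (int \<Rightarrow> complex) \<Rightarrow> nat \<Rightarrow> int \<Rightarrow> complex \<times> complex" where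
  "cell m \<alpha> \<beta> \<tau> u0 v0 0 k = (u0 k, v0 k)"
| "cell m \<alpha> \<beta> \<tau> u0 v0 (Suc n) k =
     flowN m \<alpha> \<beta> \<tau> (fst (cell m \<alpha> \<beta> \<tau> u0 v0 n (k - 1)), snd (cell m \<alpha> \<beta> \<tau> u0 v0 n (k + 1)))"

lemma Lim_ev:
  assumes "\<forall>\<^sub>F s in at_left (\<tau>::real). f s = c"
  shows "Lim (at_left \<tau>) f = c"
  by (rule tendsto_Lim) (auto intro: tendsto_eventually[OF assms])

lemma floor_cell:
  assumes "0 < \<tau>" "of_int k * \<tau> < x" "x < (of_int k + 1) * \<tau>"
  shows "\<lfloor>x / \<tau>\<rfloor> = k"
proof (rule floor_unique)
  show "of_int k \<le> x / \<tau>" using assms by (simp add: field_simps)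
  show "x / \<tau> < of_int k + 1" using assms by (simp add: field_simps)
qed

lemma ts_cell:
  assumes tau: "0 < \<tau>"
  shows "of_int k * \<tau> < x \<Longrightarrow> x < (of_int k + 1) * \<tau> \<Longrightarrow>
     ts_state m \<alpha> \<beta> \<tau> u0 v0 n x = cell m \<alpha> \<beta> \<tau> u0 v0 n k"
proof (induction n arbitrary: x k)
  case 0
  then show ?case using floor_cell[OF tau] by simp
next
  case (Suc n)
  define d where "d = x - of_int k * \<tau>"
  have d: "0 < d" "d < \<tau>" using Suc.prems by (auto simp: d_def algebra_simps)
  have ev: "\<forall>\<^sub>F s in at_left \<tau>. s \<in> {max d (\<tau> - d)<..<\<tau>}"
    by (rule eventually_at_left_real) (use d in auto)
  have l1: "Lim (at_left \<tau>) (\<lambda>s. fst (ts_state m \<alpha> \<beta> \<tau> u0 v0 n (x - s))) = fst (cell m \<alpha> \<beta> \<tau> u0 v0 n (k - 1))"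
  proof (rule Lim_ev, rule eventually_mono[OF ev])
    fix s assume s: "s \<in> {max d (\<tau> - d)<..<\<tau>}"
    have "ts_state m \<alpha> \<beta> \<tau> u0 v0 n (x - s) = cell m \<alpha> \<beta> \<tau> u0 v0 n (k - 1)"
      by (rule Suc.IH) (use s d in \<open>auto simp: d_def algebra_simps\<close>)
    then show "fst (ts_state m \<alpha> \<beta> \<tau> u0 v0 n (x - s)) = fst (cell m \<alpha> \<beta> \<tau> u0 v0 n (k - 1))" by simp
  qed
  have l2: "Lim (at_left \<tau>) (\<lambda>s. snd (ts_state m \<alpha> \<beta> \<tau> u0 v0 n (x + s))) = snd (cell m \<alpha> \<beta> \<tau> u0 v0 n (k + 1))"
  proof (rule Lim_ev, rule eventually_mono[OF ev])
    fix s assume s: "s \<in> {max d (\<tau> - d)<..<\<tau>}"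
    have "ts_state m \<alpha> \<beta> \<tau> u0 v0 n (x + s) = cell m \<alpha> \<beta> \<tau> u0 v0 n (k + 1)"
      by (rule Suc.IH) (use s d in \<open>auto simp: d_def algebra_simps\<close>)
    then show "snd (ts_state m \<alpha> \<beta> \<tau> u0 v0 n (x + s)) = snd (cell m \<alpha> \<beta> \<tau> u0 v0 n (k + 1))" by simp
  qed
  show ?case by (simp only: ts_state.simps cell.simps l1 l2)
qed

lemma ts_left_cell:
  assumes tau: "0 < \<tau>"
  shows "ts_left m \<alpha> \<beta> \<tau> u0 v0 n (of_int (j + 1) * \<tau>) =
     (fst (cell m \<alpha> \<beta> \<tau> u0 v0 n j), snd (cell m \<alpha> \<beta> \<tau> u0 v0 n (j + 1)))"
proof -
  have ev: "\<forall>\<^sub>F s in at_left \<tau>. s \<in> {0<..<\<tau>}"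
    by (rule eventually_at_left_real) (use tau in auto)
  have l1: "Lim (at_left \<tau>) (\<lambda>s. fst (ts_state m \<alpha> \<beta> \<tau> u0 v0 n (of_int (j + 1) * \<tau> - s))) = fst (cell m \<alpha> \<beta> \<tau> u0 v0 n j)"
  proof (rule Lim_ev, rule eventually_mono[OF ev])
    fix s assume s: "s \<in> {0<..<\<tau>}"
    have "ts_state m \<alpha> \<beta> \<tau> u0 v0 n (of_int (j + 1) * \<tau> - s) = cell m \<alpha> \<beta> \<tau> u0 v0 n j"
      by (rule ts_cell[OF tau]) (use s in \<open>auto simp: algebra_simps\<close>)
    then show "fst (ts_state m \<alpha> \<beta> \<tau> u0 v0 n (of_int (j + 1) * \<tau> - s)) = fst (cell m \<alpha> \<beta> \<tau> u0 v0 n j)" by simp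
  qed
  have l2: "Lim (at_left \<tau>) (\<lambda>s. snd (ts_state m \<alpha> \<beta> \<tau> u0 v0 n (of_int (j + 1) * \<tau> + s))) = snd (cell m \<alpha> \<beta> \<tau> u0 v0 n (j + 1))"
  proof (rule Lim_ev, rule eventually_mono[OF ev])
    fix s assume s: "s \<in> {0<..<\<tau>}"
    have "ts_state m \<alpha> \<beta> \<tau> u0 v0 n (of_int (j + 1) * \<tau> + s) = cell m \<alpha> \<beta> \<tau> u0 v0 n (j + 1)"
      by (rule ts_cell[OF tau]) (use s in \<open>auto simp: algebra_simps\<close>)
    then show "snd (ts_state m \<alpha> \<beta> \<tau> u0 v0 n (of_int (j + 1) * \<tau> + s)) = snd (cell m \<alpha> \<beta> \<tau> u0 v0 n (j + 1))" by simp
  qed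
  show ?thesis unfolding ts_left_def l1 l2 ..
qed

lemma norm_pair_sq: "(norm (a, b))\<^sup>2 = (norm a)\<^sup>2 + (norm b)\<^sup>2"
  by (simp add: norm_Pair)

lemma mass:
  assumes tau: "0 < \<tau>"
    and sm: "((\<lambda>j. (cmod (u0 j))\<^sup>2 + (cmod (v0 j))\<^sup>2) has_sum S0) UNIV"
  shows "((\<lambda>k. (cmod (fst (cell m \<alpha> \<beta> \<tau> u0 v0 n k)))\<^sup>2 + (cmod (snd (cell m \<alpha> \<beta> \<tau> u0 v0 n k)))\<^sup>2) has_sum S0) UNIV"
proof (induction n)
  case 0 then show ?case using sm by simp
next
  case (Suc n)
  define A where "A k = (cmod (fst (cell m \<alpha> \<beta> \<tau> u0 v0 n k)))\<^sup>2" for k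
  define B where "B k = (cmod (snd (cell m \<alpha> \<beta> \<tau> u0 v0 n k)))\<^sup>2" for k
  have sAB: "((\<lambda>k. A k + B k) has_sum S0) UNIV" using Suc by (simp add: A_def B_def)
  have "A summable_on UNIV"
    by (rule summable_on_comparison_test[OF has_sum_imp_summable[OF sAB]]) (auto simp: A_def B_def)
  then obtain SA where hA: "(A has_sum SA) UNIV" by (auto simp: summable_on_def)
  have "B summable_on UNIV"
    by (rule summable_on_comparison_test[OF has_sum_imp_summable[OF sAB]]) (auto simp: A_def B_def)
  then obtain SB where hB: "(B has_sum SB) UNIV" by (auto simp: summable_on_def)
  have "S0 = SA + SB" using has_sum_unique[OF sAB has_sum_add[OF hA hB]] .
  have bij1: "bij_betw (\<lambda>k::int. k - 1) UNIV UNIV"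
    by (rule bij_betw_byWitness[where f' = "\<lambda>k. k + 1"]) auto
  have bij2: "bij_betw (\<lambda>k::int. k + 1) UNIV UNIV"
    by (rule bij_betw_byWitness[where f' = "\<lambda>k. k - 1"]) auto
  have hA': "((\<lambda>k. A (k - 1)) has_sum SA) UNIV"
    using has_sum_reindex_bij_betw[OF bij1, of A SA] hA by simp
  have hB': "((\<lambda>k. B (k + 1)) has_sum SB) UNIV"
    using has_sum_reindex_bij_betw[OF bij2, of B SB] hB by simp
  have eq: "(cmod (fst (cell m \<alpha> \<beta> \<tau> u0 v0 (Suc n) k)))\<^sup>2 + (cmod (snd (cell m \<alpha> \<beta> \<tau> u0 v0 (Suc n) k)))\<^sup>2
      = A (k - 1) + B (k + 1)" for k
  proof -
    have "norm (cell m \<alpha> \<beta> \<tau> u0 v0 (Suc n) k) = norm (fst (cell m \<alpha> \<beta> \<tau> u0 v0 n (k - 1)), snd (cell m \<alpha> \<beta> \<tau> u0 v0 n (k + 1)))"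
      using flowN_norm[of \<tau>] tau by simp
    then have "(norm (cell m \<alpha> \<beta> \<tau> u0 v0 (Suc n) k))\<^sup>2 = A (k - 1) + B (k + 1)"
      by (simp add: norm_pair_sq A_def B_def)
    then show ?thesis by (metis norm_pair_sq prod.collapse)
  qed
  show ?case unfolding eq using has_sum_add[OF hA' hB'] \<open>S0 = SA + SB\<close> by simp
qed

lemma cell_bound:
  assumes tau: "0 < \<tau>"
    and sm: "((\<lambda>j. (cmod (u0 j))\<^sup>2 + (cmod (v0 j))\<^sup>2) has_sum S0) UNIV"
  shows "(cmod (fst (cell m \<alpha> \<beta> \<tau> u0 v0 n j)))\<^sup>2 + (cmod (snd (cell m \<alpha> \<beta> \<tau> u0 v0 n (j + 1))))\<^sup>2 \<le> S0"
proof -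
  define N where "N k = (cmod (fst (cell m \<alpha> \<beta> \<tau> u0 v0 n k)))\<^sup>2 + (cmod (snd (cell m \<alpha> \<beta> \<tau> u0 v0 n k)))\<^sup>2" for k
  have h: "(N has_sum S0) UNIV" unfolding N_def[abs_def] by (rule mass[OF tau sm])
  have fin: "(N has_sum (N j + N (j + 1))) {j, j + 1}" by (rule has_sum_finiteI) auto
  have "N j + N (j + 1) \<le> S0" by (rule has_sum_mono2[OF fin h]) (auto simp: N_def)
  then show ?thesis unfolding N_def
    using zero_le_power2[of "cmod (snd (cell m \<alpha> \<beta> \<tau> u0 v0 n j))"]
          zero_le_power2[of "cmod (fst (cell m \<alpha> \<beta> \<tau> u0 v0 n (j + 1)))"] by linarith
qed


definition Ke :: "real \<Rightarrow> real \<Rightarrow> real \<Rightarrow> real \<Rightarrow> real" where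
  "Ke m \<alpha> \<beta> M0 = \<bar>m\<bar> + 4 * \<bar>\<beta>\<bar> * M0\<^sup>2 + (2 * \<bar>\<alpha> + 2*\<beta>\<bar> + 4 * \<bar>\<beta>\<bar>) * (2 * M0\<^sup>2 + M0 + 1)"

lemma real_X_bound:
  fixes u v A B M0 :: real
  assumes "0 \<le> u" "0 \<le> v" "0 \<le> A" "0 \<le> B" "0 \<le> M0" "A \<le> M0 + u" "v \<le> M0 + B"
  shows "u * A * v * (M0 + B) \<le> (2 * M0\<^sup>2 + M0 + 1) * (u\<^sup>2 + v\<^sup>2 + u\<^sup>2 * B\<^sup>2 + v\<^sup>2 * A\<^sup>2)"
proof -
  have f1: "u * A * v * M0 \<le> (M0 + u) * (u * v * M0)"
    using mult_right_mono[OF assms(6), of "u * v * M0"] assms by (simp add: algebra_simps)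
  have f2: "M0 * u\<^sup>2 * v \<le> M0 * u\<^sup>2 * (M0 + B)"
    using mult_left_mono[OF assms(7), of "M0 * u\<^sup>2"] assms by simp
  have f3: "M0 * (u\<^sup>2 * B) \<le> M0 * ((u\<^sup>2 + u\<^sup>2 * B\<^sup>2) / 2)"
  proof -
    have "u\<^sup>2 * B \<le> (u\<^sup>2 + u\<^sup>2 * B\<^sup>2) / 2"
      using mult_left_mono[OF zero_le_power2[of "B - 1"], of "u\<^sup>2"]
      by (simp add: power2_eq_square algebra_simps)
    from mult_left_mono[OF this assms(5)] show ?thesis by simp
  qed
  have f4: "u * v \<le> (u\<^sup>2 + v\<^sup>2) / 2"
    using zero_le_power2[of "u - v"] by (simp add: power2_eq_square algebra_simps)
  have f4': "M0\<^sup>2 * (u * v) \<le> M0\<^sup>2 * ((u\<^sup>2 + v\<^sup>2) / 2)" by (rule mult_left_mono[OF f4]) simp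
  have f5: "u * A * v * B \<le> (u\<^sup>2 * B\<^sup>2 + v\<^sup>2 * A\<^sup>2) / 2"
    using zero_le_power2[of "u * B - v * A"] by (simp add: power2_eq_square algebra_simps)
  have "u * A * v * (M0 + B) = u * A * v * M0 + u * A * v * B" by (simp add: algebra_simps)
  also have "\<dots> \<le> M0\<^sup>2 * ((u\<^sup>2 + v\<^sup>2) / 2) + (M0 * M0 * u\<^sup>2 + M0 * ((u\<^sup>2 + u\<^sup>2 * B\<^sup>2) / 2))
                  + (u\<^sup>2 * B\<^sup>2 + v\<^sup>2 * A\<^sup>2) / 2"
  proof -
    have "(M0 + u) * (u * v * M0) = M0\<^sup>2 * (u * v) + M0 * u\<^sup>2 * v" by (simp add: power2_eq_square algebra_simps)
    moreover have "M0 * u\<^sup>2 * (M0 + B) = M0 * M0 * u\<^sup>2 + M0 * (u\<^sup>2 * B)" by (simp add: algebra_simps)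
    ultimately show ?thesis using f1 f2 f3 f4' f5 by linarith
  qed
  also have "\<dots> \<le> (2 * M0\<^sup>2 + M0 + 1) * (u\<^sup>2 + v\<^sup>2 + u\<^sup>2 * B\<^sup>2 + v\<^sup>2 * A\<^sup>2)"
  proof -
    have d: "(2 * M0\<^sup>2 + M0 + 1) * (u\<^sup>2 + v\<^sup>2 + u\<^sup>2 * B\<^sup>2 + v\<^sup>2 * A\<^sup>2)
       - (M0\<^sup>2 * ((u\<^sup>2 + v\<^sup>2) / 2) + (M0 * M0 * u\<^sup>2 + M0 * ((u\<^sup>2 + u\<^sup>2 * B\<^sup>2) / 2)) + (u\<^sup>2 * B\<^sup>2 + v\<^sup>2 * A\<^sup>2) / 2)
       = (M0\<^sup>2 / 2 + M0 / 2 + 1) * u\<^sup>2 + (3 * M0\<^sup>2 / 2 + M0 + 1) * v\<^sup>2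
         + (2 * M0\<^sup>2 + M0 / 2 + 1/2) * (u\<^sup>2 * B\<^sup>2) + (2 * M0\<^sup>2 + M0 + 1/2) * (v\<^sup>2 * A\<^sup>2)"
      by (simp add: power2_eq_square field_simps)
    have "0 \<le> (M0\<^sup>2 / 2 + M0 / 2 + 1) * u\<^sup>2 + (3 * M0\<^sup>2 / 2 + M0 + 1) * v\<^sup>2
         + (2 * M0\<^sup>2 + M0 / 2 + 1/2) * (u\<^sup>2 * B\<^sup>2) + (2 * M0\<^sup>2 + M0 + 1/2) * (v\<^sup>2 * A\<^sup>2)"
      using assms by (intro add_nonneg_nonneg mult_nonneg_nonneg) auto
    then show ?thesis using d by linarith
  qed
  finally show ?thesis .
qed

lemma re_i_real: "Re (\<i> * complex_of_real r) = 0" by simp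

lemma E_bound:
  fixes P Q a b :: complex
  assumes P: "cmod P \<le> M0" and Q: "cmod Q \<le> M0"
  shows "2 * Re (cnj (P - a) * (F1 m \<alpha> \<beta> P Q - F1 m \<alpha> \<beta> a b))
     \<le> Ke m \<alpha> \<beta> M0 * ((cmod (P - a))\<^sup>2 + (cmod (Q - b))\<^sup>2 + (cmod (P - a))\<^sup>2 * (cmod b)\<^sup>2 + (cmod (Q - b))\<^sup>2 * (cmod a)\<^sup>2)"
proof -
  define U where "U = P - a"
  define V where "V = Q - b"
  have M0: "0 \<le> M0" using P norm_ge_zero order_trans by blast
  define z1 where "z1 = \<i> * of_real m * cnj U * V"
  define z2 where "z2 = \<i> * of_real (\<alpha> + 2*\<beta>) * ((U * cnj U) * (Q * cnj Q))"
  define z3 where "z3 = \<i> * of_real (\<alpha> + 2*\<beta>) * cnj U * a * (Q * cnj Q - b * cnj b)"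
  define z4 where "z4 = 2 * \<i> * of_real \<beta> * cnj U ^ 2 * Q ^ 2"
  define z5 where "z5 = 2 * \<i> * of_real \<beta> * cnj U * cnj a * V * (Q + b)"
  have uu: "complex_of_real ((cmod U)\<^sup>2 * (cmod Q)\<^sup>2) = (U * cnj U) * (Q * cnj Q)"
    by (simp add: cmod_sq_cnj[symmetric])
  have id: "cnj U * (F1 m \<alpha> \<beta> P Q - F1 m \<alpha> \<beta> a b) = z1 + z2 + z3 + z4 + z5"
    unfolding z1_def z2_def z3_def z4_def z5_def U_def V_def F1_def
    by (simp add: algebra_simps power2_eq_square)
  have rz2: "Re z2 = 0" unfolding z2_def uu[symmetric] by (simp only: of_real_mult[symmetric] mult.assoc re_i_real)
  let ?u = "cmod U" and ?v = "cmod V" and ?A = "cmod a" and ?B = "cmod b"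
  have qq: "cmod (Q * cnj Q - b * cnj b) \<le> ?v * (M0 + ?B)"
  proof -
    have "Q * cnj Q - b * cnj b = of_real ((cmod Q)\<^sup>2 - (cmod b)\<^sup>2)" by (simp only: of_real_diff cmod_sq_cnj)
    then have "cmod (Q * cnj Q - b * cnj b) = \<bar>(cmod Q)\<^sup>2 - (cmod b)\<^sup>2\<bar>" by (simp only: norm_of_real)
    also have "\<dots> = \<bar>cmod Q - cmod b\<bar> * (cmod Q + cmod b)"
    proof -
      have "(cmod Q)\<^sup>2 - (cmod b)\<^sup>2 = (cmod Q - cmod b) * (cmod Q + cmod b)" by (simp add: power2_eq_square algebra_simps)
      then show ?thesis by (simp only: abs_mult abs_of_nonneg[OF add_nonneg_nonneg[OF norm_ge_zero norm_ge_zero]])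
    qed
    also have "\<dots> \<le> ?v * (M0 + ?B)"
      unfolding V_def by (intro mult_mono) (use Q norm_triangle_ineq3[of Q b] in auto)
    finally show ?thesis .
  qed
  have qb: "cmod (Q + b) \<le> M0 + ?B" using Q norm_triangle_ineq[of Q b] by simp
  have n1: "cmod z1 = \<bar>m\<bar> * ?u * ?v" by (simp add: z1_def norm_mult)
  have n3: "cmod z3 \<le> \<bar>\<alpha> + 2*\<beta>\<bar> * (?u * ?A * ?v * (M0 + ?B))"
  proof -
    have "cmod z3 = \<bar>\<alpha> + 2*\<beta>\<bar> * (?u * ?A) * cmod (Q * cnj Q - b * cnj b)"
      unfolding z3_def norm_mult norm_ii norm_of_real by (simp del: of_real_add)
    also have "\<dots> \<le> \<bar>\<alpha> + 2*\<beta>\<bar> * (?u * ?A) * (?v * (M0 + ?B))" by (intro mult_left_mono qq) auto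
    finally show ?thesis by (simp add: algebra_simps)
  qed
  have n4: "cmod z4 \<le> 2 * \<bar>\<beta>\<bar> * (M0\<^sup>2 * ?u\<^sup>2)"
  proof -
    have "cmod z4 = 2 * \<bar>\<beta>\<bar> * (?u\<^sup>2 * (cmod Q)\<^sup>2)" unfolding z4_def norm_mult norm_power by simp
    also have "\<dots> \<le> 2 * \<bar>\<beta>\<bar> * (?u\<^sup>2 * M0\<^sup>2)"
      by (intro mult_left_mono power_mono Q) auto
    finally show ?thesis by (simp add: algebra_simps)
  qed
  have n5: "cmod z5 \<le> 2 * \<bar>\<beta>\<bar> * (?u * ?A * ?v * (M0 + ?B))"
  proof -
    have "cmod z5 = 2 * \<bar>\<beta>\<bar> * (?u * ?A * ?v) * cmod (Q + b)" unfolding z5_def norm_mult by simp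
    also have "\<dots> \<le> 2 * \<bar>\<beta>\<bar> * (?u * ?A * ?v) * (M0 + ?B)" by (intro mult_left_mono qb) auto
    finally show ?thesis by (simp add: algebra_simps)
  qed
  have "Re (z1 + z2 + z3 + z4 + z5) \<le> cmod z1 + cmod z3 + cmod z4 + cmod z5"
    using rz2 complex_Re_le_cmod[of z1] complex_Re_le_cmod[of z3] complex_Re_le_cmod[of z4] complex_Re_le_cmod[of z5]
    by simp
  then have "2 * Re (cnj U * (F1 m \<alpha> \<beta> P Q - F1 m \<alpha> \<beta> a b))
     \<le> 2 * \<bar>m\<bar> * (?u * ?v) + 4 * \<bar>\<beta>\<bar> * M0\<^sup>2 * ?u\<^sup>2 + (2 * \<bar>\<alpha> + 2*\<beta>\<bar> + 4 * \<bar>\<beta>\<bar>) * (?u * ?A * ?v * (M0 + ?B))"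
    unfolding id using n1 n3 n4 n5 by (simp add: algebra_simps)
  also have "\<dots> \<le> \<bar>m\<bar> * (?u\<^sup>2 + ?v\<^sup>2 + ?u\<^sup>2 * ?B\<^sup>2 + ?v\<^sup>2 * ?A\<^sup>2)
     + 4 * \<bar>\<beta>\<bar> * M0\<^sup>2 * (?u\<^sup>2 + ?v\<^sup>2 + ?u\<^sup>2 * ?B\<^sup>2 + ?v\<^sup>2 * ?A\<^sup>2)
     + (2 * \<bar>\<alpha> + 2*\<beta>\<bar> + 4 * \<bar>\<beta>\<bar>) * ((2 * M0\<^sup>2 + M0 + 1) * (?u\<^sup>2 + ?v\<^sup>2 + ?u\<^sup>2 * ?B\<^sup>2 + ?v\<^sup>2 * ?A\<^sup>2))"
  proof -
    have uv: "2 * (?u * ?v) \<le> ?u\<^sup>2 + ?v\<^sup>2 + ?u\<^sup>2 * ?B\<^sup>2 + ?v\<^sup>2 * ?A\<^sup>2"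
    proof -
      have a1: "2 * (?u * ?v) \<le> ?u\<^sup>2 + ?v\<^sup>2" using zero_le_power2[of "?u - ?v"] by (simp add: power2_eq_square algebra_simps)
      have a2: "0 \<le> ?u\<^sup>2 * ?B\<^sup>2" "0 \<le> ?v\<^sup>2 * ?A\<^sup>2" by simp_all
      from a1 a2 show ?thesis by linarith
    qed
    have "2 * \<bar>m\<bar> * (?u * ?v) \<le> \<bar>m\<bar> * (?u\<^sup>2 + ?v\<^sup>2 + ?u\<^sup>2 * ?B\<^sup>2 + ?v\<^sup>2 * ?A\<^sup>2)"
      using mult_left_mono[OF uv, of "\<bar>m\<bar>"] by simp
    moreover have "4 * \<bar>\<beta>\<bar> * M0\<^sup>2 * ?u\<^sup>2 \<le> 4 * \<bar>\<beta>\<bar> * M0\<^sup>2 * (?u\<^sup>2 + ?v\<^sup>2 + ?u\<^sup>2 * ?B\<^sup>2 + ?v\<^sup>2 * ?A\<^sup>2)"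
      by (intro mult_left_mono) auto
    moreover have "(2 * \<bar>\<alpha> + 2*\<beta>\<bar> + 4 * \<bar>\<beta>\<bar>) * (?u * ?A * ?v * (M0 + ?B))
        \<le> (2 * \<bar>\<alpha> + 2*\<beta>\<bar> + 4 * \<bar>\<beta>\<bar>) * ((2 * M0\<^sup>2 + M0 + 1) * (?u\<^sup>2 + ?v\<^sup>2 + ?u\<^sup>2 * ?B\<^sup>2 + ?v\<^sup>2 * ?A\<^sup>2))"
    proof (rule mult_left_mono)
      show "?u * ?A * ?v * (M0 + ?B) \<le> (2 * M0\<^sup>2 + M0 + 1) * (?u\<^sup>2 + ?v\<^sup>2 + ?u\<^sup>2 * ?B\<^sup>2 + ?v\<^sup>2 * ?A\<^sup>2)"
      proof (rule real_X_bound)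
        show "?A \<le> M0 + ?u" using P norm_triangle_ineq4[of P a] norm_triangle_ineq3 unfolding U_def
          by (smt (verit) norm_minus_commute norm_triangle_ineq2)
        show "?v \<le> M0 + ?B" using Q norm_triangle_ineq4[of Q b] unfolding V_def by simp
      qed (auto simp: M0)
    qed auto
    ultimately show ?thesis by linarith
  qed
  also have "\<dots> = Ke m \<alpha> \<beta> M0 * (?u\<^sup>2 + ?v\<^sup>2 + ?u\<^sup>2 * ?B\<^sup>2 + ?v\<^sup>2 * ?A\<^sup>2)"
    unfolding Ke_def by (simp add: algebra_simps)
  finally show ?thesis by (simp add: U_def V_def)
qed


lemma csq_deriv:
  fixes y :: "real \<Rightarrow> complex"
  assumes "(y has_vector_derivative D) (at t within s)"
  shows "((\<lambda>r. (cmod (y r))\<^sup>2) has_real_derivative (2 * Re (cnj (y t) * D))) (at t within s)"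
proof -
  have "((\<lambda>r. inner (y r) (y r)) has_real_derivative (2 * inner (y t) D)) (at t within s)"
    by (rule nsq_deriv[OF assms])
  moreover have "inner (y t) D = Re (cnj (y t) * D)" by (simp add: inner_complex_def)
  ultimately show ?thesis by (simp add: power2_norm_eq_inner)
qed

lemma nb_bound:
  "2 * Re (cnj b * F1 m \<alpha> \<beta> b a) \<le> \<bar>m\<bar> * ((cmod a)\<^sup>2 + (cmod b)\<^sup>2) + 4 * \<bar>\<beta>\<bar> * ((cmod a)\<^sup>2 * (cmod b)\<^sup>2)"
proof -
  define z1 where "z1 = \<i> * of_real m * (cnj b * a)"
  define z2 where "z2 = \<i> * of_real (\<alpha> + 2*\<beta>) * ((b * cnj b) * (a * cnj a))"
  define z3 where "z3 = 2 * \<i> * of_real \<beta> * (cnj b ^ 2 * a ^ 2)"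
  have id: "cnj b * F1 m \<alpha> \<beta> b a = z1 + z2 + z3"
    unfolding z1_def z2_def z3_def F1_def by (simp add: algebra_simps power2_eq_square)
  have uu: "(b * cnj b) * (a * cnj a) = complex_of_real ((cmod b)\<^sup>2 * (cmod a)\<^sup>2)"
    by (simp add: cmod_sq_cnj[symmetric])
  have rz2: "Re z2 = 0" unfolding z2_def uu by (simp only: of_real_mult[symmetric] mult.assoc re_i_real)
  have n1: "cmod z1 = \<bar>m\<bar> * (cmod a * cmod b)" by (simp add: z1_def norm_mult)
  have n3: "cmod z3 = 2 * \<bar>\<beta>\<bar> * ((cmod a)\<^sup>2 * (cmod b)\<^sup>2)" by (simp add: z3_def norm_mult norm_power)
  have ab: "2 * (cmod a * cmod b) \<le> (cmod a)\<^sup>2 + (cmod b)\<^sup>2"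
    using zero_le_power2[of "cmod a - cmod b"] by (simp add: power2_eq_square algebra_simps)
  have "2 * Re (cnj b * F1 m \<alpha> \<beta> b a) \<le> 2 * cmod z1 + 2 * cmod z3"
    unfolding id using rz2 complex_Re_le_cmod[of z1] complex_Re_le_cmod[of z3] by simp
  also have "\<dots> \<le> \<bar>m\<bar> * ((cmod a)\<^sup>2 + (cmod b)\<^sup>2) + 4 * \<bar>\<beta>\<bar> * ((cmod a)\<^sup>2 * (cmod b)\<^sup>2)"
    unfolding n1 n3 using mult_left_mono[OF ab, of "\<bar>m\<bar>"] by simp
  finally show ?thesis .
qed

lemma du_gen:
  fixes P Q Qt a b :: complex
  assumes P: "cmod P \<le> M0" and Q: "cmod Q \<le> M0" and Qt: "cmod Qt \<le> M0"
    and d: "cmod (Qt - Q) \<le> 2 * M * \<tau>" and M: "0 \<le> M" and tau: "0 \<le> \<tau>"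
  shows "2 * Re (cnj (P - a) * (F1 m \<alpha> \<beta> P Qt - F1 m \<alpha> \<beta> a b))
     \<le> (Ke m \<alpha> \<beta> M0 + 1) * ((cmod (P - a))\<^sup>2 + (cmod (Q - b))\<^sup>2 + (cmod (P - a))\<^sup>2 * (cmod b)\<^sup>2 + (cmod (Q - b))\<^sup>2 * (cmod a)\<^sup>2)
       + 4 * (Kl m \<alpha> \<beta> M0)\<^sup>2 * M\<^sup>2 * \<tau>\<^sup>2"
proof -
  let ?\<Phi> = "(cmod (P - a))\<^sup>2 + (cmod (Q - b))\<^sup>2 + (cmod (P - a))\<^sup>2 * (cmod b)\<^sup>2 + (cmod (Q - b))\<^sup>2 * (cmod a)\<^sup>2"
  let ?K = "Kl m \<alpha> \<beta> M0"
  have split: "2 * Re (cnj (P - a) * (F1 m \<alpha> \<beta> P Qt - F1 m \<alpha> \<beta> a b))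
     = 2 * Re (cnj (P - a) * (F1 m \<alpha> \<beta> P Qt - F1 m \<alpha> \<beta> P Q)) + 2 * Re (cnj (P - a) * (F1 m \<alpha> \<beta> P Q - F1 m \<alpha> \<beta> a b))"
    by (simp add: algebra_simps)
  have l1: "cmod (F1 m \<alpha> \<beta> P Qt - F1 m \<alpha> \<beta> P Q) \<le> ?K * (2 * M * \<tau>)"
  proof -
    have "cmod (F1 m \<alpha> \<beta> P Qt - F1 m \<alpha> \<beta> P Q) \<le> ?K * (cmod (P - P) + cmod (Qt - Q))"
      by (rule F1_lip) (use P Q Qt in auto)
    also have "\<dots> \<le> ?K * (2 * M * \<tau>)" using d by (simp add: mult_left_mono Kl_nonneg)
    finally show ?thesis .
  qed
  have t1: "2 * Re (cnj (P - a) * (F1 m \<alpha> \<beta> P Qt - F1 m \<alpha> \<beta> P Q)) \<le> (cmod (P - a))\<^sup>2 + 4 * ?K\<^sup>2 * M\<^sup>2 * \<tau>\<^sup>2"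
  proof -
    have "2 * Re (cnj (P - a) * (F1 m \<alpha> \<beta> P Qt - F1 m \<alpha> \<beta> P Q)) \<le> 2 * (cmod (P - a) * cmod (F1 m \<alpha> \<beta> P Qt - F1 m \<alpha> \<beta> P Q))"
      using complex_Re_le_cmod[of "cnj (P - a) * (F1 m \<alpha> \<beta> P Qt - F1 m \<alpha> \<beta> P Q)"]
      unfolding norm_mult complex_mod_cnj by linarith
    also have "\<dots> \<le> 2 * (cmod (P - a) * (?K * (2 * M * \<tau>)))"
      by (intro mult_left_mono l1) auto
    also have "\<dots> \<le> (cmod (P - a))\<^sup>2 + 4 * ?K\<^sup>2 * M\<^sup>2 * \<tau>\<^sup>2"
      using zero_le_power2[of "cmod (P - a) - ?K * (2 * M * \<tau>)"] by (simp add: power2_eq_square algebra_simps)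
    finally show ?thesis .
  qed
  have t2: "2 * Re (cnj (P - a) * (F1 m \<alpha> \<beta> P Q - F1 m \<alpha> \<beta> a b)) \<le> Ke m \<alpha> \<beta> M0 * ?\<Phi>"
    by (rule E_bound[OF P Q])
  have "(cmod (P - a))\<^sup>2 \<le> ?\<Phi>" by simp
  moreover have "(Ke m \<alpha> \<beta> M0 + 1) * ?\<Phi> = Ke m \<alpha> \<beta> M0 * ?\<Phi> + ?\<Phi>" by (simp add: algebra_simps)
  ultimately show ?thesis unfolding split using t1 t2 by linarith
qed

definition K1c where "K1c m \<alpha> \<beta> M0 = Ke m \<alpha> \<beta> M0 + 1"
definition K2c where "K2c m \<alpha> \<beta> M0 = 4 * (Kl m \<alpha> \<beta> M0)\<^sup>2"
definition K3c where "K3c m \<alpha> \<beta> M0 = 2 * K1c m \<alpha> \<beta> M0 + 2 * \<bar>m\<bar> + 8 * \<bar>\<beta>\<bar>"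
definition E1c where "E1c m \<alpha> \<beta> M0 c0 = exp (K3c m \<alpha> \<beta> M0 * (1 + c0))"
definition C4c where "C4c m \<alpha> \<beta> M0 c0 = K1c m \<alpha> \<beta> M0 * E1c m \<alpha> \<beta> M0 c0"
definition C5c where "C5c m \<alpha> \<beta> M0 c0 = 2 * K1c m \<alpha> \<beta> M0 * E1c m \<alpha> \<beta> M0 c0 * K2c m \<alpha> \<beta> M0 * (1 + c0) + K2c m \<alpha> \<beta> M0 + 1"

lemma Ke_nonneg: "0 \<le> M0 \<Longrightarrow> 0 \<le> Ke m \<alpha> \<beta> M0" by (simp add: Ke_def)

lemma consts_pos:
  assumes "0 \<le> M0" "0 \<le> c0"
  shows "1 \<le> K1c m \<alpha> \<beta> M0" "0 \<le> K2c m \<alpha> \<beta> M0" "0 \<le> K3c m \<alpha> \<beta> M0" "0 < E1c m \<alpha> \<beta> M0 c0"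
        "0 < C4c m \<alpha> \<beta> M0 c0" "0 < C5c m \<alpha> \<beta> M0 c0"
proof -
  show k1: "1 \<le> K1c m \<alpha> \<beta> M0" using Ke_nonneg[OF assms(1)] by (simp add: K1c_def)
  show k2: "0 \<le> K2c m \<alpha> \<beta> M0" by (simp add: K2c_def)
  show "0 \<le> K3c m \<alpha> \<beta> M0" using k1 by (simp add: K3c_def)
  show e: "0 < E1c m \<alpha> \<beta> M0 c0" by (simp add: E1c_def)
  show "0 < C4c m \<alpha> \<beta> M0 c0" using k1 e by (simp add: C4c_def)
  have "0 \<le> 2 * K1c m \<alpha> \<beta> M0 * E1c m \<alpha> \<beta> M0 c0 * K2c m \<alpha> \<beta> M0 * (1 + c0)"
    using k1 k2 e assms by (intro mult_nonneg_nonneg) auto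
  then show "0 < C5c m \<alpha> \<beta> M0 c0" using k2 unfolding C5c_def by linarith
qed


lemma core:
  fixes P Q Pt Qt a b :: "real \<Rightarrow> complex"
  assumes tau: "0 < \<tau>" "\<tau> < 1" and c0: "0 \<le> c0" and M: "0 \<le> M" and M0: "0 \<le> M0"
    and dP: "\<And>s. s \<in> {0..\<tau>} \<Longrightarrow> (P has_vector_derivative F1 m \<alpha> \<beta> (P s) (Qt s)) (at s within {0..\<tau>})"
    and dQ: "\<And>s. s \<in> {0..\<tau>} \<Longrightarrow> (Q has_vector_derivative F1 m \<alpha> \<beta> (Q s) (Pt s)) (at s within {0..\<tau>})"
    and da: "\<And>s. s \<in> {0..\<tau>} \<Longrightarrow> (a has_vector_derivative F1 m \<alpha> \<beta> (a s) (b s)) (at s within {0..\<tau>})"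
    and db: "\<And>s. s \<in> {0..\<tau>} \<Longrightarrow> (b has_vector_derivative F1 m \<alpha> \<beta> (b s) (a s)) (at s within {0..\<tau>})"
    and bP: "\<And>s. s \<in> {0..\<tau>} \<Longrightarrow> cmod (P s) \<le> M0"
    and bQ: "\<And>s. s \<in> {0..\<tau>} \<Longrightarrow> cmod (Q s) \<le> M0"
    and bPt: "\<And>s. s \<in> {0..\<tau>} \<Longrightarrow> cmod (Pt s) \<le> M0"
    and bQt: "\<And>s. s \<in> {0..\<tau>} \<Longrightarrow> cmod (Qt s) \<le> M0"
    and dQt: "\<And>s. s \<in> {0..\<tau>} \<Longrightarrow> cmod (Qt s - Q s) \<le> 2 * M * \<tau>"
    and dPt: "\<And>s. s \<in> {0..\<tau>} \<Longrightarrow> cmod (Pt s - P s) \<le> 2 * M * \<tau>"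
    and Rb: "\<And>s. s \<in> {0..\<tau>} \<Longrightarrow> (cmod (a s))\<^sup>2 + (cmod (b s))\<^sup>2 \<le> Rs"
    and Rs: "Rs * \<tau> \<le> c0"
  shows "(cmod (P \<tau> - a \<tau>))\<^sup>2 \<le> (cmod (P 0 - a 0))\<^sup>2
     + C4c m \<alpha> \<beta> M0 c0 * ((cmod (P 0 - a 0))\<^sup>2 + (cmod (Q 0 - b 0))\<^sup>2
          + (cmod (P 0 - a 0))\<^sup>2 * (cmod (b 0))\<^sup>2 + (cmod (Q 0 - b 0))\<^sup>2 * (cmod (a 0))\<^sup>2) * \<tau>
     + C5c m \<alpha> \<beta> M0 c0 * M\<^sup>2 * \<tau>\<^sup>2"
proof -
  define K1 where "K1 = K1c m \<alpha> \<beta> M0"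
  define K2 where "K2 = K2c m \<alpha> \<beta> M0"
  define K3 where "K3 = K3c m \<alpha> \<beta> M0"
  define E1 where "E1 = E1c m \<alpha> \<beta> M0 c0"
  have K1: "1 \<le> K1" and K2: "0 \<le> K2" and K3: "0 \<le> K3" and E1: "0 < E1"
    using consts_pos[OF M0 c0] by (auto simp: K1_def K2_def K3_def E1_def)
  have T0: "0 \<in> {0..\<tau>}" and TT: "\<tau> \<in> {0..\<tau>}" using tau by auto
  have Rs0: "0 \<le> Rs" using Rb[OF T0] by (smt (verit) zero_le_power2)
  define nu where "nu s = (cmod (P s - a s))\<^sup>2" for s
  define nv where "nv s = (cmod (Q s - b s))\<^sup>2" for s
  define na where "na s = (cmod (a s))\<^sup>2" for s
  define nb where "nb s = (cmod (b s))\<^sup>2" for s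
  define \<Phi> where "\<Phi> s = nu s + nv s + nu s * nb s + nv s * na s" for s
  define du where "du s = 2 * Re (cnj (P s - a s) * (F1 m \<alpha> \<beta> (P s) (Qt s) - F1 m \<alpha> \<beta> (a s) (b s)))" for s
  define dv where "dv s = 2 * Re (cnj (Q s - b s) * (F1 m \<alpha> \<beta> (Q s) (Pt s) - F1 m \<alpha> \<beta> (b s) (a s)))" for s
  define dna where "dna s = 2 * Re (cnj (a s) * F1 m \<alpha> \<beta> (a s) (b s))" for s
  define dnb where "dnb s = 2 * Re (cnj (b s) * F1 m \<alpha> \<beta> (b s) (a s))" for s
  have Dnu: "(nu has_real_derivative du s) (at s within {0..\<tau>})" if s: "s \<in> {0..\<tau>}" for s
  proof -
    have "((\<lambda>r. P r - a r) has_vector_derivative (F1 m \<alpha> \<beta> (P s) (Qt s) - F1 m \<alpha> \<beta> (a s) (b s))) (at s within {0..\<tau>})"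
      using dP[OF s] da[OF s] by (rule derivative_intros)
    from csq_deriv[OF this] show ?thesis unfolding nu_def[abs_def] du_def .
  qed
  have Dnv: "(nv has_real_derivative dv s) (at s within {0..\<tau>})" if s: "s \<in> {0..\<tau>}" for s
  proof -
    have "((\<lambda>r. Q r - b r) has_vector_derivative (F1 m \<alpha> \<beta> (Q s) (Pt s) - F1 m \<alpha> \<beta> (b s) (a s))) (at s within {0..\<tau>})"
      using dQ[OF s] db[OF s] by (rule derivative_intros)
    from csq_deriv[OF this] show ?thesis unfolding nv_def[abs_def] dv_def .
  qed
  have Dna: "(na has_real_derivative dna s) (at s within {0..\<tau>})" if s: "s \<in> {0..\<tau>}" for s
    using csq_deriv[OF da[OF s]] unfolding na_def[abs_def] dna_def .
  have Dnb: "(nb has_real_derivative dnb s) (at s within {0..\<tau>})" if s: "s \<in> {0..\<tau>}" for s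
    using csq_deriv[OF db[OF s]] unfolding nb_def[abs_def] dnb_def .
  define \<Phi>' where "\<Phi>' s = du s + dv s + (du s * nb s + nu s * dnb s) + (dv s * na s + nv s * dna s)" for s
  have D\<Phi>: "(\<Phi> has_real_derivative \<Phi>' s) (at s within {0..\<tau>})" if s: "s \<in> {0..\<tau>}" for s
  proof -
    have "((\<lambda>s. nu s + nv s + nu s * nb s + nv s * na s) has_real_derivative
        (du s + dv s + (du s * nb s + dnb s * nu s) + (dv s * na s + dna s * nv s))) (at s within {0..\<tau>})"
      by (intro DERIV_add DERIV_mult Dnu Dnv Dna Dnb s)
    then show ?thesis unfolding \<Phi>_def[abs_def] \<Phi>'_def by (simp add: mult.commute)
  qed
  have nonneg: "0 \<le> nu s" "0 \<le> nv s" "0 \<le> na s" "0 \<le> nb s" for s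
    by (simp_all add: nu_def nv_def na_def nb_def)
  have Phi0: "0 \<le> \<Phi> s" for s using nonneg[of s] by (simp add: \<Phi>_def)
  define g where "g s = K1 * \<Phi> s + K2 * M\<^sup>2 * \<tau>\<^sup>2" for s
  have g0: "0 \<le> g s" for s using K1 K2 Phi0[of s] by (simp add: g_def)
  have du_le: "du s \<le> g s" if s: "s \<in> {0..\<tau>}" for s
  proof -
    have "du s \<le> (Ke m \<alpha> \<beta> M0 + 1) * ((cmod (P s - a s))\<^sup>2 + (cmod (Q s - b s))\<^sup>2 + (cmod (P s - a s))\<^sup>2 * (cmod (b s))\<^sup>2 + (cmod (Q s - b s))\<^sup>2 * (cmod (a s))\<^sup>2)
       + 4 * (Kl m \<alpha> \<beta> M0)\<^sup>2 * M\<^sup>2 * \<tau>\<^sup>2"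
      unfolding du_def by (rule du_gen) (use bP bQ bQt dQt s M tau in auto)
    then show ?thesis by (simp add: g_def K1_def K2_def K1c_def K2c_def \<Phi>_def nu_def nv_def na_def nb_def)
  qed
  have dv_le: "dv s \<le> g s" if s: "s \<in> {0..\<tau>}" for s
  proof -
    have "dv s \<le> (Ke m \<alpha> \<beta> M0 + 1) * ((cmod (Q s - b s))\<^sup>2 + (cmod (P s - a s))\<^sup>2 + (cmod (Q s - b s))\<^sup>2 * (cmod (a s))\<^sup>2 + (cmod (P s - a s))\<^sup>2 * (cmod (b s))\<^sup>2)
       + 4 * (Kl m \<alpha> \<beta> M0)\<^sup>2 * M\<^sup>2 * \<tau>\<^sup>2"
      unfolding dv_def by (rule du_gen) (use bP bQ bPt dPt s M tau in auto)
    then show ?thesis by (simp add: g_def K1_def K2_def K1c_def K2c_def \<Phi>_def nu_def nv_def na_def nb_def algebra_simps)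
  qed
  have dnb_le: "dnb s \<le> \<bar>m\<bar> * (na s + nb s) + 4 * \<bar>\<beta>\<bar> * (na s * nb s)" for s
    unfolding dnb_def na_def nb_def by (rule nb_bound)
  have dna_le: "dna s \<le> \<bar>m\<bar> * (na s + nb s) + 4 * \<bar>\<beta>\<bar> * (na s * nb s)" for s
    using nb_bound[of "a s" m \<alpha> \<beta> "b s"] unfolding dna_def na_def nb_def by (simp add: algebra_simps)
  define k where "k = (1 + Rs) * K3"
  define c where "c = (1 + Rs) * (2 * K2 * M\<^sup>2 * \<tau>\<^sup>2)"
  have k0: "0 \<le> k" using Rs0 K3 by (simp add: k_def)
  have c0': "0 \<le> c" using Rs0 K2 by (simp add: c_def)
  have Phi'_le: "\<Phi>' s \<le> k * \<Phi> s + c" if s: "s \<in> {0..\<tau>}" for s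
  proof -
    have nab: "na s + nb s \<le> Rs" using Rb[OF s] by (simp add: na_def nb_def)
    have na_le: "na s \<le> Rs" and nb_le: "nb s \<le> Rs" using nab nonneg[of s] by auto
    have e1: "du s * nb s \<le> g s * Rs"
      using mult_right_mono[OF du_le[OF s] nonneg(4)[of s]] mult_left_mono[OF nb_le g0[of s]] by linarith
    have e2: "dv s * na s \<le> g s * Rs"
      using mult_right_mono[OF dv_le[OF s] nonneg(3)[of s]] mult_left_mono[OF na_le g0[of s]] by linarith
    have e3: "nu s * dnb s \<le> (\<bar>m\<bar> + 4 * \<bar>\<beta>\<bar>) * Rs * \<Phi> s"
    proof -
      have "nu s * dnb s \<le> nu s * (\<bar>m\<bar> * (na s + nb s) + 4 * \<bar>\<beta>\<bar> * (na s * nb s))"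
        by (rule mult_left_mono[OF dnb_le nonneg(1)[of s]])
      also have "\<dots> \<le> nu s * (\<bar>m\<bar> * Rs + 4 * \<bar>\<beta>\<bar> * (Rs * nb s))"
        by (intro mult_left_mono add_mono mult_right_mono nab na_le nonneg) auto
      also have "\<dots> = \<bar>m\<bar> * Rs * nu s + 4 * \<bar>\<beta>\<bar> * Rs * (nu s * nb s)" by (simp add: algebra_simps)
      also have "\<dots> \<le> \<bar>m\<bar> * Rs * \<Phi> s + 4 * \<bar>\<beta>\<bar> * Rs * \<Phi> s"
        using nonneg[of s] Rs0 by (intro add_mono mult_left_mono) (auto simp: \<Phi>_def)
      finally show ?thesis by (simp add: algebra_simps)
    qed
    have e4: "nv s * dna s \<le> (\<bar>m\<bar> + 4 * \<bar>\<beta>\<bar>) * Rs * \<Phi> s"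
    proof -
      have "nv s * dna s \<le> nv s * (\<bar>m\<bar> * (na s + nb s) + 4 * \<bar>\<beta>\<bar> * (na s * nb s))"
        by (rule mult_left_mono[OF dna_le nonneg(2)[of s]])
      also have "\<dots> \<le> nv s * (\<bar>m\<bar> * Rs + 4 * \<bar>\<beta>\<bar> * (na s * Rs))"
        by (intro mult_left_mono add_mono mult_left_mono nab nb_le nonneg) auto
      also have "\<dots> = \<bar>m\<bar> * Rs * nv s + 4 * \<bar>\<beta>\<bar> * Rs * (nv s * na s)" by (simp add: algebra_simps)
      also have "\<dots> \<le> \<bar>m\<bar> * Rs * \<Phi> s + 4 * \<bar>\<beta>\<bar> * Rs * \<Phi> s"
        using nonneg[of s] Rs0 by (intro add_mono mult_left_mono) (auto simp: \<Phi>_def)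
      finally show ?thesis by (simp add: algebra_simps)
    qed
    have sum: "\<Phi>' s \<le> 2 * g s + 2 * (g s * Rs) + 2 * ((\<bar>m\<bar> + 4 * \<bar>\<beta>\<bar>) * Rs * \<Phi> s)"
      unfolding \<Phi>'_def using du_le[OF s] dv_le[OF s] e1 e2 e3 e4 by linarith
    have eq: "k * \<Phi> s + c - (2 * g s + 2 * (g s * Rs) + 2 * ((\<bar>m\<bar> + 4 * \<bar>\<beta>\<bar>) * Rs * \<Phi> s))
        = (2 * \<bar>m\<bar> + 8 * \<bar>\<beta>\<bar>) * \<Phi> s"
      unfolding k_def c_def g_def K3_def K3c_def K1_def by (simp add: algebra_simps)
    have "0 \<le> (2 * \<bar>m\<bar> + 8 * \<bar>\<beta>\<bar>) * \<Phi> s" using Phi0[of s] by simp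
    then show ?thesis using sum eq by linarith
  qed
  have PhiB: "\<Phi> s \<le> E1 * (\<Phi> 0 + 2 * K2 * (1 + c0) * M\<^sup>2 * \<tau>\<^sup>2)" if s: "s \<in> {0..\<tau>}" for s
  proof -
    have "\<Phi> s \<le> exp (k * s) * (\<Phi> 0 + c * s)"
      by (rule gronwall[OF k0 c0' D\<Phi> Phi'_le s])
    also have "\<dots> \<le> E1 * (\<Phi> 0 + 2 * K2 * (1 + c0) * M\<^sup>2 * \<tau>\<^sup>2)"
    proof (rule mult_mono)
      have "k * s \<le> k * \<tau>" using s k0 by (simp add: mult_left_mono)
      also have "k * \<tau> = K3 * (\<tau> + Rs * \<tau>)" by (simp add: k_def algebra_simps)
      also have "\<dots> \<le> K3 * (1 + c0)" using tau Rs K3 by (intro mult_left_mono) auto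
      finally show "exp (k * s) \<le> E1" by (simp add: E1_def E1c_def K3_def)
      have "c * s \<le> c * \<tau>" using s c0' by (simp add: mult_left_mono)
      also have "c * \<tau> = (2 * K2 * M\<^sup>2 * \<tau>\<^sup>2) * (\<tau> + Rs * \<tau>)" by (simp add: c_def algebra_simps)
      also have "\<dots> \<le> (2 * K2 * M\<^sup>2 * \<tau>\<^sup>2) * (1 + c0)" using tau Rs K2 by (intro mult_left_mono) auto
      finally show "\<Phi> 0 + c * s \<le> \<Phi> 0 + 2 * K2 * (1 + c0) * M\<^sup>2 * \<tau>\<^sup>2" by (simp add: algebra_simps)
      show "0 \<le> \<Phi> 0 + c * s" using Phi0[of 0] c0' s by simp
    qed (use E1 in auto)
    finally show ?thesis .
  qed
  define c' where "c' = K1 * E1 * \<Phi> 0 + (2 * K1 * E1 * K2 * (1 + c0) + K2) * M\<^sup>2 * \<tau>\<^sup>2"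
  have c'0: "0 \<le> c'" unfolding c'_def using K1 E1 K2 c0 Phi0[of 0] by (intro add_nonneg_nonneg mult_nonneg_nonneg) auto
  have du_c: "du s \<le> 0 * nu s + c'" if s: "s \<in> {0..\<tau>}" for s
  proof -
    have "du s \<le> K1 * \<Phi> s + K2 * M\<^sup>2 * \<tau>\<^sup>2" using du_le[OF s] by (simp add: g_def)
    also have "\<dots> \<le> K1 * (E1 * (\<Phi> 0 + 2 * K2 * (1 + c0) * M\<^sup>2 * \<tau>\<^sup>2)) + K2 * M\<^sup>2 * \<tau>\<^sup>2"
      using mult_left_mono[OF PhiB[OF s], of K1] K1 by simp
    also have "\<dots> = c'" by (simp add: c'_def algebra_simps)
    finally show ?thesis by simp
  qed
  have "nu \<tau> \<le> exp (0 * \<tau>) * (nu 0 + c' * \<tau>)"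
    by (rule gronwall[OF _ c'0 Dnu du_c TT]) simp
  then have nuT: "nu \<tau> \<le> nu 0 + c' * \<tau>" by simp
  have "c' * \<tau> = K1 * E1 * \<Phi> 0 * \<tau> + (2 * K1 * E1 * K2 * (1 + c0) + K2) * M\<^sup>2 * \<tau>\<^sup>2 * \<tau>"
    by (simp add: c'_def algebra_simps)
  also have "\<dots> \<le> K1 * E1 * \<Phi> 0 * \<tau> + (2 * K1 * E1 * K2 * (1 + c0) + K2 + 1) * M\<^sup>2 * \<tau>\<^sup>2"
  proof -
    have A: "0 \<le> (2 * K1 * E1 * K2 * (1 + c0) + K2) * M\<^sup>2 * \<tau>\<^sup>2"
      using K1 E1 K2 c0 by (intro mult_nonneg_nonneg add_nonneg_nonneg) auto
    have "(2 * K1 * E1 * K2 * (1 + c0) + K2) * M\<^sup>2 * \<tau>\<^sup>2 * \<tau> \<le> (2 * K1 * E1 * K2 * (1 + c0) + K2) * M\<^sup>2 * \<tau>\<^sup>2"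
      using mult_left_mono[of \<tau> 1, OF _ A] tau by simp
    moreover have "0 \<le> M\<^sup>2 * \<tau>\<^sup>2" by simp
    moreover have "(2 * K1 * E1 * K2 * (1 + c0) + K2 + 1) * M\<^sup>2 * \<tau>\<^sup>2 = (2 * K1 * E1 * K2 * (1 + c0) + K2) * M\<^sup>2 * \<tau>\<^sup>2 + M\<^sup>2 * \<tau>\<^sup>2"
      by (simp add: algebra_simps)
    ultimately show ?thesis by linarith
  qed
  finally have "nu \<tau> \<le> nu 0 + K1 * E1 * \<Phi> 0 * \<tau> + (2 * K1 * E1 * K2 * (1 + c0) + K2 + 1) * M\<^sup>2 * \<tau>\<^sup>2"
    using nuT by linarith
  then show ?thesis
    by (simp add: nu_def \<Phi>_def nv_def na_def nb_def C4c_def C5c_def K1_def E1_def K2_def algebra_simps)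
qed


lemma line_deriv:
  fixes f :: "real \<Rightarrow> real \<Rightarrow> complex"
  assumes d: "((\<lambda>p. f (fst p) (snd p)) has_derivative (\<lambda>h. of_real (fst h) * fx + of_real (snd h) * ft))
                (at (x0 + c * s, t0 + s) within UNIV \<times> {0..T})"
    and sub: "\<And>r. r \<in> S \<Longrightarrow> t0 + r \<in> {0..T}"
  shows "((\<lambda>r. f (x0 + c * r) (t0 + r)) has_vector_derivative (of_real c * fx + ft)) (at s within S)"
proof -
  define \<gamma> where "\<gamma> r = (x0 + c * r, t0 + r)" for r
  have d\<gamma>: "(\<gamma> has_derivative (\<lambda>h. (c * h, h))) (at s within S)"
    unfolding \<gamma>_def by (auto intro!: derivative_eq_intros)
  have img: "\<gamma> ` S \<subseteq> UNIV \<times> {0..T}" using sub by (auto simp: \<gamma>_def)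
  have dg: "((\<lambda>p. f (fst p) (snd p)) has_derivative (\<lambda>h. of_real (fst h) * fx + of_real (snd h) * ft))
                (at (\<gamma> s) within \<gamma> ` S)"
    using has_derivative_subset[OF d img] by (simp add: \<gamma>_def)
  have "(((\<lambda>p. f (fst p) (snd p)) \<circ> \<gamma>) has_derivative ((\<lambda>h. of_real (fst h) * fx + of_real (snd h) * ft) \<circ> (\<lambda>h. (c * h, h)))) (at s within S)"
    by (rule diff_chain_within[OF d\<gamma> dg])
  moreover have "(\<lambda>p. f (fst p) (snd p)) \<circ> \<gamma> = (\<lambda>r. f (x0 + c * r) (t0 + r))" by (simp add: fun_eq_iff \<gamma>_def)
  moreover have "(\<lambda>h. of_real (fst h) * fx + of_real (snd h) * ft) \<circ> (\<lambda>h. (c * h, h)) = (\<lambda>h. h *\<^sub>R (of_real c * fx + ft))"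
    by (simp add: fun_eq_iff algebra_simps scaleR_conv_of_real)
  ultimately show ?thesis unfolding has_vector_derivative_def by simp
qed

lemma x_lip1:
  fixes f :: "real \<Rightarrow> real \<Rightarrow> complex"
  assumes d: "\<And>x. ((\<lambda>p. f (fst p) (snd p)) has_derivative (\<lambda>h. of_real (fst h) * fx x + of_real (snd h) * ft x))
                (at (x, t) within UNIV \<times> {0..T})"
    and t: "t \<in> {0..T}" and bnd: "\<And>x. cmod (fx x) \<le> M" and lt: "x2 < x1"
  shows "cmod (f x1 t - f x2 t) \<le> M * \<bar>x1 - x2\<bar>"
proof -
  have dg: "((\<lambda>r. f r t) has_derivative (\<lambda>h. h *\<^sub>R fx r)) (at r)" for r
  proof -
    define \<gamma> where "\<gamma> r = (r, t)" for r :: real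
    have d\<gamma>: "(\<gamma> has_derivative (\<lambda>h. (h, 0))) (at r within UNIV)"
      unfolding \<gamma>_def by (auto intro!: derivative_eq_intros)
    have img: "\<gamma> ` UNIV \<subseteq> UNIV \<times> {0..T}" using t by (auto simp: \<gamma>_def)
    have dd: "((\<lambda>p. f (fst p) (snd p)) has_derivative (\<lambda>h. of_real (fst h) * fx r + of_real (snd h) * ft r))
                (at (\<gamma> r) within \<gamma> ` UNIV)"
      using has_derivative_subset[OF d[of r] img] by (simp add: \<gamma>_def)
    have "(((\<lambda>p. f (fst p) (snd p)) \<circ> \<gamma>) has_derivative ((\<lambda>h. of_real (fst h) * fx r + of_real (snd h) * ft r) \<circ> (\<lambda>h. (h, 0)))) (at r within UNIV)"
      by (rule diff_chain_within[OF d\<gamma> dd])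
    moreover have "(\<lambda>p. f (fst p) (snd p)) \<circ> \<gamma> = (\<lambda>r. f r t)" by (simp add: fun_eq_iff \<gamma>_def)
    moreover have "(\<lambda>h. of_real (fst h) * fx r + of_real (snd h) * ft r) \<circ> (\<lambda>h. (h, 0)) = (\<lambda>h. h *\<^sub>R fx r)"
      by (simp add: fun_eq_iff scaleR_conv_of_real)
    ultimately show ?thesis by simp
  qed
  have cont: "continuous_on {x2..x1} (\<lambda>r. f r t)"
    using dg has_derivative_continuous continuous_at_imp_continuous_on by blast
  obtain \<xi> where "norm (f x1 t - f x2 t) \<le> norm ((x1 - x2) *\<^sub>R fx \<xi>)"
    using mvt_general[OF lt cont, of "\<lambda>r h. h *\<^sub>R fx r"] dg by blast
  also have "\<dots> = \<bar>x1 - x2\<bar> * cmod (fx \<xi>)" by simp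
  also have "\<dots> \<le> \<bar>x1 - x2\<bar> * M" by (rule mult_left_mono[OF bnd]) simp
  finally show ?thesis by (simp add: mult.commute)
qed

lemma x_lip:
  fixes f :: "real \<Rightarrow> real \<Rightarrow> complex"
  assumes d: "\<And>x. ((\<lambda>p. f (fst p) (snd p)) has_derivative (\<lambda>h. of_real (fst h) * fx x + of_real (snd h) * ft x))
                (at (x, t) within UNIV \<times> {0..T})"
    and t: "t \<in> {0..T}" and bnd: "\<And>x. cmod (fx x) \<le> M"
  shows "cmod (f x1 t - f x2 t) \<le> M * \<bar>x1 - x2\<bar>"
proof (cases x2 x1 rule: linorder_cases)
  case less then show ?thesis by (rule x_lip1[OF d t bnd])
next
  case equal
  have "0 \<le> M" using bnd[of 0] norm_ge_zero order_trans by blast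
  then show ?thesis using equal by simp
next
  case greater
  have "cmod (f x2 t - f x1 t) \<le> M * \<bar>x2 - x1\<bar>" by (rule x_lip1[OF d t bnd greater])
  then show ?thesis by (simp add: norm_minus_commute abs_minus_commute)
qed

lemma vd_fst:
  fixes y :: "real \<Rightarrow> 'a::real_normed_vector \<times> 'b::real_normed_vector"
  assumes "(y has_vector_derivative D) (at t within S)"
  shows "((\<lambda>r. fst (y r)) has_vector_derivative fst D) (at t within S)"
  using has_derivative_fst[OF assms[unfolded has_vector_derivative_def]]
  unfolding has_vector_derivative_def by simp

lemma vd_snd:
  fixes y :: "real \<Rightarrow> 'a::real_normed_vector \<times> 'b::real_normed_vector"
  assumes "(y has_vector_derivative D) (at t within S)"
  shows "((\<lambda>r. snd (y r)) has_vector_derivative snd D) (at t within S)"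
  using has_derivative_snd[OF assms[unfolded has_vector_derivative_def]]
  unfolding has_vector_derivative_def by simp


lemma main:
  fixes m \<alpha> \<beta> c0 M0 M T \<tau> :: real and uh vh ux ut vx vt :: "real \<Rightarrow> real \<Rightarrow> complex"
    and u0 v0 :: "int \<Rightarrow> complex" and j :: int and n :: nat
  assumes c0: "0 < c0" and T: "0 < T" and sol: "nlde_solution m \<alpha> \<beta> T uh vh ux ut vx vt"
    and bdd1: "bdd_above ((\<lambda>(x, t). cmod (uh x t) + cmod (vh x t) + 1) ` (UNIV \<times> {0..T}))"
    and bdd2: "bdd_above ((\<lambda>(x, t). cmod (ut x t) + cmod (ux x t) + cmod (vt x t) + cmod (vx x t) + 1)
                      ` (UNIV \<times> {0..T}))"
    and M0: "M0 = (SUP (x, t)\<in>UNIV \<times> {0..T}. cmod (uh x t) + cmod (vh x t) + 1)"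
    and M: "M = (SUP (x, t)\<in>UNIV \<times> {0..T}. cmod (ut x t) + cmod (ux x t) + cmod (vt x t) + cmod (vx x t) + 1)"
    and tau: "0 < \<tau>" "\<tau> < 1"
    and sm: "(\<lambda>j. (cmod (u0 j))\<^sup>2 + (cmod (v0 j))\<^sup>2) summable_on UNIV"
    and c0b: "(\<Sum>\<^sub>\<infinity>j. (cmod (u0 j))\<^sup>2 + (cmod (v0 j))\<^sup>2) * \<tau> \<le> c0"
    and nT: "(real n + 1) * \<tau> \<le> T"
  shows "let w = (\<lambda>s. flowN m \<alpha> \<beta> s (ts_left m \<alpha> \<beta> \<tau> u0 v0 n (of_int (j + 1) * \<tau>)));
                   U = (\<lambda>s. uh (of_int j * \<tau> + s) (real n * \<tau> + s) - fst (w s));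
                   V = (\<lambda>s. vh (of_int (j + 2) * \<tau> - s) (real n * \<tau> + s) - snd (w s));
                   L = (cmod (U 0))\<^sup>2 + (cmod (V 0))\<^sup>2;
                   D = (cmod (U 0))\<^sup>2 * (cmod (snd (w 0)))\<^sup>2 + (cmod (V 0))\<^sup>2 * (cmod (fst (w 0)))\<^sup>2
               in (cmod (U \<tau>))\<^sup>2 \<le> (cmod (U 0))\<^sup>2 + C4c m \<alpha> \<beta> \<bar>M0\<bar> c0 * (L + D) * \<tau> + C5c m \<alpha> \<beta> \<bar>M0\<bar> c0 * M\<^sup>2 * \<tau>\<^sup>2 \<and>
                  (cmod (V \<tau>))\<^sup>2 \<le> (cmod (V 0))\<^sup>2 + C4c m \<alpha> \<beta> \<bar>M0\<bar> c0 * (L + D) * \<tau> + C5c m \<alpha> \<beta> \<bar>M0\<bar> c0 * M\<^sup>2 * \<tau>\<^sup>2"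
proof -
  have b0: "cmod (uh x t) + cmod (vh x t) + 1 \<le> M0" if "t \<in> {0..T}" for x t
    using cSUP_upper[OF _ bdd1, of "(x, t)"] that unfolding M0 by auto
  have b1: "cmod (ut x t) + cmod (ux x t) + cmod (vt x t) + cmod (vx x t) + 1 \<le> M" if "t \<in> {0..T}" for x t
    using cSUP_upper[OF _ bdd2, of "(x, t)"] that unfolding M by auto
  have T0: "0 \<in> {0..T}" using T by simp
  have M01: "1 \<le> M0" using b0[OF T0, of 0] by (smt (verit) norm_ge_zero)
  have M1: "1 \<le> M" using b1[OF T0, of 0] by (smt (verit) norm_ge_zero)
  have aM0: "\<bar>M0\<bar> = M0" using M01 by simp
  have buh: "cmod (uh x t) \<le> M0" and bvh: "cmod (vh x t) \<le> M0" if "t \<in> {0..T}" for x t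
    using b0[OF that, of x] by (smt (verit) norm_ge_zero)+
  have bux: "cmod (ux x t) \<le> M" and bvx: "cmod (vx x t) \<le> M" if "t \<in> {0..T}" for x t
    using b1[OF that, of x] by (smt (verit) norm_ge_zero)+
  have du: "((\<lambda>p. uh (fst p) (snd p)) has_derivative (\<lambda>h. of_real (fst h) * ux x t + of_real (snd h) * ut x t))
           (at (x, t) within UNIV \<times> {0..T})"
   and dv: "((\<lambda>p. vh (fst p) (snd p)) has_derivative (\<lambda>h. of_real (fst h) * vx x t + of_real (snd h) * vt x t))
           (at (x, t) within UNIV \<times> {0..T})"
   and eqn: "(ut x t + ux x t, vt x t - vx x t) = nldeF m \<alpha> \<beta> (uh x t, vh x t)"
    if "t \<in> {0..T}" for x t
    using sol that unfolding nlde_solution_def by blast+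
  have eu: "ux x t + ut x t = F1 m \<alpha> \<beta> (uh x t) (vh x t)" and ev: "vt x t - vx x t = F1 m \<alpha> \<beta> (vh x t) (uh x t)"
    if "t \<in> {0..T}" for x t
    using eqn[OF that, of x] by (auto simp: nldeF_eq add.commute)
  have tin: "real n * \<tau> + s \<in> {0..T}" if "s \<in> {0..\<tau>}" for s
  proof -
    have "real n * \<tau> + s \<le> real n * \<tau> + \<tau>" using that by simp
    also have "\<dots> = (real n + 1) * \<tau>" by (simp add: algebra_simps)
    finally show ?thesis using nT that tau by auto
  qed
  define x1 where "x1 = of_int j * \<tau>"
  define x2 where "x2 = of_int (j + 2) * \<tau>"
  define t0 where "t0 = real n * \<tau>"
  define P where "P s = uh (x1 + s) (t0 + s)" for s
  define Qt where "Qt s = vh (x1 + s) (t0 + s)" for s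
  define Q where "Q s = vh (x2 - s) (t0 + s)" for s
  define Pt where "Pt s = uh (x2 - s) (t0 + s)" for s
  define p where "p = ts_left m \<alpha> \<beta> \<tau> u0 v0 n (of_int (j + 1) * \<tau>)"
  obtain y where y0: "y 0 = p"
    and yd: "\<forall>t\<in>{0..\<tau>}. (y has_vector_derivative nldeF m \<alpha> \<beta> (y t)) (at t within {0..\<tau>})"
    and yf: "\<forall>s\<in>{0..\<tau>}. flowN m \<alpha> \<beta> s p = y s"
    using flowN_sol[of \<tau> p m \<alpha> \<beta>] tau by auto
  define a where "a s = fst (y s)" for s
  define b where "b s = snd (y s)" for s
  have tin': "t0 + s \<in> {0..T}" if "s \<in> {0..\<tau>}" for s using tin[OF that] by (simp add: t0_def)
  have dP: "(P has_vector_derivative F1 m \<alpha> \<beta> (P s) (Qt s)) (at s within {0..\<tau>})" if s: "s \<in> {0..\<tau>}" for s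
  proof -
    have "((\<lambda>r. uh (x1 + 1 * r) (t0 + r)) has_vector_derivative (of_real 1 * ux (x1 + 1 * s) (t0 + s) + ut (x1 + 1 * s) (t0 + s))) (at s within {0..\<tau>})"
      by (rule line_deriv[OF du[OF tin'[OF s]]]) (rule tin')
    then show ?thesis using eu[OF tin'[OF s], of "x1 + s"] by (simp add: P_def[abs_def] Qt_def)
  qed
  have dQ: "(Q has_vector_derivative F1 m \<alpha> \<beta> (Q s) (Pt s)) (at s within {0..\<tau>})" if s: "s \<in> {0..\<tau>}" for s
  proof -
    have "((\<lambda>r. vh (x2 + (-1) * r) (t0 + r)) has_vector_derivative (of_real (-1) * vx (x2 + (-1) * s) (t0 + s) + vt (x2 + (-1) * s) (t0 + s))) (at s within {0..\<tau>})"
      by (rule line_deriv[OF dv[OF tin'[OF s]]]) (rule tin')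
    then show ?thesis using ev[OF tin'[OF s], of "x2 - s"] by (simp add: Q_def[abs_def] Pt_def)
  qed
  have yF: "nldeF m \<alpha> \<beta> (y s) = (F1 m \<alpha> \<beta> (a s) (b s), F1 m \<alpha> \<beta> (b s) (a s))" for s
    using nldeF_eq[of m \<alpha> \<beta> "a s" "b s"] by (simp add: a_def b_def)
  have da: "(a has_vector_derivative F1 m \<alpha> \<beta> (a s) (b s)) (at s within {0..\<tau>})" if s: "s \<in> {0..\<tau>}" for s
    using vd_fst[OF yd[rule_format, OF s]] unfolding yF a_def[abs_def] by simp
  have db: "(b has_vector_derivative F1 m \<alpha> \<beta> (b s) (a s)) (at s within {0..\<tau>})" if s: "s \<in> {0..\<tau>}" for s
    using vd_snd[OF yd[rule_format, OF s]] unfolding yF b_def[abs_def] by simp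
  have bP: "cmod (P s) \<le> M0" and bQ: "cmod (Q s) \<le> M0" and bPt: "cmod (Pt s) \<le> M0" and bQt: "cmod (Qt s) \<le> M0"
    if s: "s \<in> {0..\<tau>}" for s
    using buh[OF tin'[OF s]] bvh[OF tin'[OF s]] by (auto simp: P_def Q_def Pt_def Qt_def)
  have sd: "\<bar>2 * s - 2 * \<tau>\<bar> \<le> 2 * \<tau>" if s: "s \<in> {0..\<tau>}" for s using s by auto
  have dQt: "cmod (Qt s - Q s) \<le> 2 * M * \<tau>" if s: "s \<in> {0..\<tau>}" for s
  proof -
    have "cmod (vh (x1 + s) (t0 + s) - vh (x2 - s) (t0 + s)) \<le> M * \<bar>(x1 + s) - (x2 - s)\<bar>"
      by (rule x_lip[OF dv[OF tin'[OF s]] tin'[OF s] bvx[OF tin'[OF s]]])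
    also have "\<bar>(x1 + s) - (x2 - s)\<bar> = \<bar>2 * s - 2 * \<tau>\<bar>" by (simp add: x1_def x2_def algebra_simps)
    also have "M * \<bar>2 * s - 2 * \<tau>\<bar> \<le> M * (2 * \<tau>)" using sd[OF s] M1 by (intro mult_left_mono) auto
    finally show ?thesis by (simp add: Qt_def Q_def)
  qed
  have dPt: "cmod (Pt s - P s) \<le> 2 * M * \<tau>" if s: "s \<in> {0..\<tau>}" for s
  proof -
    have "cmod (uh (x2 - s) (t0 + s) - uh (x1 + s) (t0 + s)) \<le> M * \<bar>(x2 - s) - (x1 + s)\<bar>"
      by (rule x_lip[OF du[OF tin'[OF s]] tin'[OF s] bux[OF tin'[OF s]]])
    also have "\<bar>(x2 - s) - (x1 + s)\<bar> = \<bar>2 * s - 2 * \<tau>\<bar>" by (simp add: x1_def x2_def algebra_simps)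
    also have "M * \<bar>2 * s - 2 * \<tau>\<bar> \<le> M * (2 * \<tau>)" using sd[OF s] M1 by (intro mult_left_mono) auto
    finally show ?thesis by (simp add: Pt_def P_def)
  qed
  define S0 where "S0 = (\<Sum>\<^sub>\<infinity>j. (cmod (u0 j))\<^sup>2 + (cmod (v0 j))\<^sup>2)"
  have hs: "((\<lambda>j. (cmod (u0 j))\<^sup>2 + (cmod (v0 j))\<^sup>2) has_sum S0) UNIV" using sm by (simp add: S0_def)
  have Rb: "(cmod (a s))\<^sup>2 + (cmod (b s))\<^sup>2 \<le> S0" if s: "s \<in> {0..\<tau>}" for s
  proof -
    have "(cmod (a s))\<^sup>2 + (cmod (b s))\<^sup>2 = (norm (y s))\<^sup>2" by (simp add: a_def b_def norm_pair_sq[symmetric])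
    also have "\<dots> = (norm p)\<^sup>2" using sol_norm[OF y0 yd s] by simp
    also have "\<dots> = (cmod (fst (cell m \<alpha> \<beta> \<tau> u0 v0 n j)))\<^sup>2 + (cmod (snd (cell m \<alpha> \<beta> \<tau> u0 v0 n (j + 1))))\<^sup>2"
      unfolding p_def ts_left_cell[OF tau(1)] by (simp only: norm_pair_sq)
    also have "\<dots> \<le> S0" by (rule cell_bound[OF tau(1) hs])
    finally show ?thesis .
  qed
  have Rs: "S0 * \<tau> \<le> c0" using c0b by (simp add: S0_def)
  have M0': "0 \<le> M0" using M01 by simp
  have cU: "(cmod (P \<tau> - a \<tau>))\<^sup>2 \<le> (cmod (P 0 - a 0))\<^sup>2
     + C4c m \<alpha> \<beta> M0 c0 * ((cmod (P 0 - a 0))\<^sup>2 + (cmod (Q 0 - b 0))\<^sup>2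
          + (cmod (P 0 - a 0))\<^sup>2 * (cmod (b 0))\<^sup>2 + (cmod (Q 0 - b 0))\<^sup>2 * (cmod (a 0))\<^sup>2) * \<tau>
     + C5c m \<alpha> \<beta> M0 c0 * M\<^sup>2 * \<tau>\<^sup>2"
    by (rule core[OF tau less_imp_le[OF c0] _ M0' dP dQ da db bP bQ bPt bQt dQt dPt Rb Rs]) (use M1 in auto)
  have cV: "(cmod (Q \<tau> - b \<tau>))\<^sup>2 \<le> (cmod (Q 0 - b 0))\<^sup>2
     + C4c m \<alpha> \<beta> M0 c0 * ((cmod (Q 0 - b 0))\<^sup>2 + (cmod (P 0 - a 0))\<^sup>2
          + (cmod (Q 0 - b 0))\<^sup>2 * (cmod (a 0))\<^sup>2 + (cmod (P 0 - a 0))\<^sup>2 * (cmod (b 0))\<^sup>2) * \<tau>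
     + C5c m \<alpha> \<beta> M0 c0 * M\<^sup>2 * \<tau>\<^sup>2"
  proof (rule core[OF tau less_imp_le[OF c0] _ M0' dQ dP db da bQ bP bQt bPt dPt dQt _ Rs])
    fix s assume "s \<in> {0..\<tau>}"
    then show "(cmod (b s))\<^sup>2 + (cmod (a s))\<^sup>2 \<le> S0" using Rb by (simp add: add.commute)
  qed (use M1 in auto)
  have w0: "flowN m \<alpha> \<beta> 0 p = y 0" and wT: "flowN m \<alpha> \<beta> \<tau> p = y \<tau>" using yf tau by auto
  have LD: "(cmod (P 0 - a 0))\<^sup>2 + (cmod (Q 0 - b 0))\<^sup>2 + ((cmod (P 0 - a 0))\<^sup>2 * (cmod (b 0))\<^sup>2 + (cmod (Q 0 - b 0))\<^sup>2 * (cmod (a 0))\<^sup>2)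
     = (cmod (P 0 - a 0))\<^sup>2 + (cmod (Q 0 - b 0))\<^sup>2 + (cmod (P 0 - a 0))\<^sup>2 * (cmod (b 0))\<^sup>2 + (cmod (Q 0 - b 0))\<^sup>2 * (cmod (a 0))\<^sup>2"
    by (simp add: algebra_simps)
  have LD2: "(cmod (P 0 - a 0))\<^sup>2 + (cmod (Q 0 - b 0))\<^sup>2 + ((cmod (P 0 - a 0))\<^sup>2 * (cmod (b 0))\<^sup>2 + (cmod (Q 0 - b 0))\<^sup>2 * (cmod (a 0))\<^sup>2)
     = (cmod (Q 0 - b 0))\<^sup>2 + (cmod (P 0 - a 0))\<^sup>2 + (cmod (Q 0 - b 0))\<^sup>2 * (cmod (a 0))\<^sup>2 + (cmod (P 0 - a 0))\<^sup>2 * (cmod (b 0))\<^sup>2"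
    by (simp add: algebra_simps)
  have e1: "uh (of_int j * \<tau> + s) (real n * \<tau> + s) = P s" for s by (simp add: P_def x1_def t0_def)
  have e2: "vh (of_int (j + 2) * \<tau> - s) (real n * \<tau> + s) = Q s" for s by (simp add: Q_def x2_def t0_def)
  have eqs: "(cmod (Q 0 - b 0))\<^sup>2 + (cmod (P 0 - a 0))\<^sup>2 + (cmod (Q 0 - b 0))\<^sup>2 * (cmod (a 0))\<^sup>2 + (cmod (P 0 - a 0))\<^sup>2 * (cmod (b 0))\<^sup>2
      = (cmod (P 0 - a 0))\<^sup>2 + (cmod (Q 0 - b 0))\<^sup>2 + (cmod (P 0 - a 0))\<^sup>2 * (cmod (b 0))\<^sup>2 + (cmod (Q 0 - b 0))\<^sup>2 * (cmod (a 0))\<^sup>2"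
    by (simp add: algebra_simps)
  note cV' = cV[unfolded eqs]
  show ?thesis
    unfolding Let_def e1 e2 p_def[symmetric] w0 wT aM0 a_def[symmetric] b_def[symmetric] LD
    using cU cV' by (simp add: a_def b_def)
qed

theorem lemma4p4:
  fixes m \<alpha> \<beta> :: real
  assumes "m \<ge> 0"
  shows "\<forall>c0 M0 M :: real. c0 > 0 \<longrightarrow>
    (\<exists>C4 C5 :: real. C4 > 0 \<and> C5 > 0 \<and>
      (\<forall>(T::real) uh vh ux ut vx vt.
         T > 0 \<longrightarrow> nlde_solution m \<alpha> \<beta> T uh vh ux ut vx vt \<longrightarrow>
         bdd_above ((\<lambda>(x, t). cmod (uh x t) + cmod (vh x t) + 1) ` (UNIV \<times> {0..T})) \<longrightarrow>
         bdd_above ((\<lambda>(x, t). cmod (ut x t) + cmod (ux x t) + cmod (vt x t) + cmod (vx x t) + 1)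
                      ` (UNIV \<times> {0..T})) \<longrightarrow>
         M0 = (SUP (x, t)\<in>UNIV \<times> {0..T}. cmod (uh x t) + cmod (vh x t) + 1) \<longrightarrow>
         M = (SUP (x, t)\<in>UNIV \<times> {0..T}. cmod (ut x t) + cmod (ux x t) + cmod (vt x t) + cmod (vx x t) + 1) \<longrightarrow>
         (\<forall>(\<tau>::real) (u0::int \<Rightarrow> complex) (v0::int \<Rightarrow> complex).
            0 < \<tau> \<longrightarrow> \<tau> < 1 \<longrightarrow>
            (\<lambda>j. (cmod (u0 j))\<^sup>2 + (cmod (v0 j))\<^sup>2) summable_on UNIV \<longrightarrow>
            (\<Sum>\<^sub>\<infinity>j. (cmod (u0 j))\<^sup>2 + (cmod (v0 j))\<^sup>2) * \<tau> \<le> c0 \<longrightarrow>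
            (\<forall>(j::int) (n::nat). (real n + 1) * \<tau> \<le> T \<longrightarrow>
              (let w = (\<lambda>s. flowN m \<alpha> \<beta> s (ts_left m \<alpha> \<beta> \<tau> u0 v0 n (of_int (j + 1) * \<tau>)));
                   U = (\<lambda>s. uh (of_int j * \<tau> + s) (real n * \<tau> + s) - fst (w s));
                   V = (\<lambda>s. vh (of_int (j + 2) * \<tau> - s) (real n * \<tau> + s) - snd (w s));
                   L = (cmod (U 0))\<^sup>2 + (cmod (V 0))\<^sup>2;
                   D = (cmod (U 0))\<^sup>2 * (cmod (snd (w 0)))\<^sup>2 + (cmod (V 0))\<^sup>2 * (cmod (fst (w 0)))\<^sup>2
               in (cmod (U \<tau>))\<^sup>2 \<le> (cmod (U 0))\<^sup>2 + C4 * (L + D) * \<tau> + C5 * M\<^sup>2 * \<tau>\<^sup>2 \<and>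
                  (cmod (V \<tau>))\<^sup>2 \<le> (cmod (V 0))\<^sup>2 + C4 * (L + D) * \<tau> + C5 * M\<^sup>2 * \<tau>\<^sup>2)))))"
    apply (intro allI impI)
  subgoal for c0 M0 M
    apply (rule exI[of _ "C4c m \<alpha> \<beta> \<bar>M0\<bar> c0"], rule exI[of _ "C5c m \<alpha> \<beta> \<bar>M0\<bar> c0"])
    apply (intro conjI allI impI)
    subgoal by (rule consts_pos(5)) auto
    subgoal by (rule consts_pos(6)) auto
    subgoal premises prems for T uh vh ux ut vx vt \<tau> u0 v0 j n
      by (rule main[OF prems])
    done
  done

end
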